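(* Let $(A,B)$ be an $m\times n$ bimatrix game such that $P=\{x\in\mathbb R^m\mid x\ge0,\ B^\top x\le\mathbf 1\}$ and $Q=\{y\in\mathbb R^n\mid Ay\le\mathbf 1,\ y\ge0\}$ are polytopes. Let $d=m+n$, $C=\begin{bmatrix}0&A\\ B^\top&0\end{bmatrix}$ (a $d\times d$ matrix), write $C^\top=[c_1\cdots c_d]$, and let $S=\{z\in\mathbb R^d\mid z\ge 0,\ Cz\le\mathbf 1\}$. The following are equivalent: (a) $(A,B)$ is nondegenerate. (b) No point of $P$ has more than $m$ labels and no point of $Q$ has more than $n$ labels. (c) The symmetric game $(C,C^\top)$ is nondegenerate. (d) For no $z\in S$ are more than $d$ of the inequalities $z\ge0$, $Cz\le\mathbf 1$ binding. (e) For every $z\in S$, the row vectors $e_i^\top$ (for $i$ with $z_i=0$) and $c_j^\top$ (for $j$ with $c_j^\top z=1$) are linearly independent. (f) For all $\hat x\in X$ and $\hat y\in Y$: with $I=\mathrm{supp}(\hat x)$, $J=\mathrm{bestresp}(\hat x)$, $K=\mathrm{bestresp}(\hat y)$, $L=\mathrm{supp}(\hat y)$, the columns of the submatrix $B_{IJ}=(b_{ij})_{i\in I,j\in J}$ are linearly independent and the rows of $A_{KL}=(a_{ij})_{i\in K,j\in L}$ are linearly independent. (g) For all $\hat x\in X$ and $\hat y\in Y$: if $I$ is the set of labels of $\hat x$ and $J$ the set of labels of $\hat y$, then $P(I)$ has dimension $m-|I|$ and $Q(J)$ has dimension $n-|J|$. (h) $P$ and $Q$ are simple polytopes, and for each of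 them every inequality in its defining system that is redundant (can be omitted without changing the polytope) is never binding. (i) $P$ and $Q$ are simple polytopes, and every pure strategy of either player that is weakly dominated by or payoff equivalent to a different mixed strategy is strictly dominated.
   Context: $A,B$ real $m\times n$; $\mathbf 1$ all-ones vector; $e_i$ unit vectors; inequalities componentwise. $X=\{x\in\mathbb R^m\mid x\ge0,\sum_ix_i=1\}$, $Y=\{y\in\mathbb R^n\mid y\ge0,\sum_jy_j=1\}$. $\mathrm{supp}(z)=\{k\mid z_k>0\}$; $\mathrm{bestresp}(y)=\{i\mid (Ay)_i=\max_k(Ay)_k\}$ for $y\in Y$; $\mathrm{bestresp}(x)=\{j\mid (B^\top x)_j=\max_k(B^\top x)_k\}$ for $x\in X$. A bimatrix game $(A,B)$ is nondegenerate if $|\mathrm{bestresp}(z)|\le|\mathrm{supp}(z)|$ for all $z\in X$ and all $z\in Y$ (for $(C,C^\top)$ the same definition applies with both strategy sets the simplex in $\mathbb R^d$). Labels: $x\in X$ has label $i\le m$ if $x_i=0$ and label $m+j$ if $j\in\mathrm{bestresp}(x)$; $y\in Y$ has label $m+j$ if $y_j=0$ and label $i\le m$ if $i\in\mathrm{bestresp}(y)$. $x\in P$ has label $i\le m$ if $x_i=0$ and label $m+j$ if $(B^\top x)_j=1$; $y\in Q$ has label $i\le m$ if $(Ay)_i=1$ and label $m+j$ if $y_j=0$. In $S$, $z$ has label $i$ if $z_i=0$ or $c_i^\top z=1$. For $I,J\subseteq\{1,\ldots,m+n\}$: $P(I)=\{x\in P\mid x$ has at least all labels in $I\}$, $Q(J)=\{y\in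 Q\mid y$ has at least all labels in $J\}$; dimension means affine dimension. A $k$-dimensional polytope is simple if no point lies on more than $k$ facets. For player 1, pure strategy $i$ (row $a_i^\top$ of $A$) is weakly dominated by or payoff equivalent to a mixed strategy $x\in X$, $x\ne e_i$, if $a_i^\top\le x^\top A$ componentwise, and strictly dominated if $a_i^\top< x'^\top A$ componentwise for some $x'\in X$; analogously for player 2 with columns of $B$ and $y\in Y$ ($B e_j\le By$, resp. $Be_j<By'$). *)

theory Defs
  imports "HOL-Analysis.Analysis"
begin

text \<open>Labels 1..m are encoded as Inl i, labels m+1..m+n as Inr j, i.e. labels
live in the finite type 'm + 'n (so d = m + n = CARD('m + 'n)).\<close>

definition mixed :: "(real^'k) set" where
  "mixed = {x. (\<forall>i. 0 \<le> x $ i) \<and> (\<Sum>i\<in>UNIV. x $ i) = 1}"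

definition supp :: "real^'k \<Rightarrow> 'k set" where
  "supp z = {k. z $ k > 0}"

definition bestresp1 :: "real^'n^'m \<Rightarrow> real^'n \<Rightarrow> 'm set" where
  "bestresp1 A y = {i. (A *v y) $ i = Max (range (\<lambda>k. (A *v y) $ k))}"

definition bestresp2 :: "real^'n^'m \<Rightarrow> real^'m \<Rightarrow> 'n set" where
  "bestresp2 B x = {j. (transpose B *v x) $ j = Max (range (\<lambda>k. (transpose B *v x) $ k))}"

definition nondegenerate :: "real^'n^'m \<Rightarrow> real^'n^'m \<Rightarrow> bool" where
  "nondegenerate A B \<longleftrightarrow>
     (\<forall>x\<in>mixed. card (bestresp2 B x) \<le> card (supp x)) \<and>
     (\<forall>y\<in>mixed. card (bestresp1 A y) \<le> card (supp y))"

definition labelsX :: "real^'n^'m \<Rightarrow> real^'m \<Rightarrow> ('m + 'n) set" where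
  "labelsX B x = Inl ` {i. x $ i = 0} \<union> Inr ` bestresp2 B x"

definition labelsY :: "real^'n^'m \<Rightarrow> real^'n \<Rightarrow> ('m + 'n) set" where
  "labelsY A y = Inl ` bestresp1 A y \<union> Inr ` {j. y $ j = 0}"

definition Pineq :: "real^'n^'m \<Rightarrow> ('m + 'n) \<Rightarrow> real^'m \<Rightarrow> bool" where
  "Pineq B l x = (case l of Inl i \<Rightarrow> 0 \<le> x $ i | Inr j \<Rightarrow> (transpose B *v x) $ j \<le> 1)"

definition Pbind :: "real^'n^'m \<Rightarrow> ('m + 'n) \<Rightarrow> real^'m \<Rightarrow> bool" where
  "Pbind B l x = (case l of Inl i \<Rightarrow> x $ i = 0 | Inr j \<Rightarrow> (transpose B *v x) $ j = 1)"

definition Qineq :: "real^'n^'m \<Rightarrow> ('m + 'n) \<Rightarrow> real^'n \<Rightarrow> bool" where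
  "Qineq A l y = (case l of Inl i \<Rightarrow> (A *v y) $ i \<le> 1 | Inr j \<Rightarrow> 0 \<le> y $ j)"

definition Qbind :: "real^'n^'m \<Rightarrow> ('m + 'n) \<Rightarrow> real^'n \<Rightarrow> bool" where
  "Qbind A l y = (case l of Inl i \<Rightarrow> (A *v y) $ i = 1 | Inr j \<Rightarrow> y $ j = 0)"

definition Ppoly :: "real^'n^'m \<Rightarrow> (real^'m) set" where
  "Ppoly B = {x. \<forall>l. Pineq B l x}"

definition Qpoly :: "real^'n^'m \<Rightarrow> (real^'n) set" where
  "Qpoly A = {y. \<forall>l. Qineq A l y}"

definition labelsP :: "real^'n^'m \<Rightarrow> real^'m \<Rightarrow> ('m + 'n) set" where
  "labelsP B x = {l. Pbind B l x}"

definition labelsQ :: "real^'n^'m \<Rightarrow> real^'n \<Rightarrow> ('m + 'n) set" where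
  "labelsQ A y = {l. Qbind A l y}"

definition PI :: "real^'n^'m \<Rightarrow> ('m + 'n) set \<Rightarrow> (real^'m) set" where
  "PI B I = {x \<in> Ppoly B. I \<subseteq> labelsP B x}"

definition QJ :: "real^'n^'m \<Rightarrow> ('m + 'n) set \<Rightarrow> (real^'n) set" where
  "QJ A J = {y \<in> Qpoly A. J \<subseteq> labelsQ A y}"

text \<open>C = [[0, A], [B^T, 0]] as a d x d matrix, d = m + n.\<close>
definition Cmat :: "real^'n^'m \<Rightarrow> real^'n^'m \<Rightarrow> real^('m + 'n)^('m + 'n)" where
  "Cmat A B = (\<chi> k l. case (k, l) of
       (Inl i, Inr j) \<Rightarrow> A $ i $ j
     | (Inr j, Inl i) \<Rightarrow> B $ i $ j
     | _ \<Rightarrow> 0)"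

definition Spoly :: "real^'d^'d \<Rightarrow> (real^'d) set" where
  "Spoly C = {z. (\<forall>k. 0 \<le> z $ k) \<and> (\<forall>k. (C *v z) $ k \<le> 1)}"

text \<open>Linear independence of a family (with possible repetitions) of vectors v k, k in K.\<close>
definition lin_indep_family :: "('i \<Rightarrow> 'v::real_vector) \<Rightarrow> 'i set \<Rightarrow> bool" where
  "lin_indep_family v K \<longleftrightarrow>
     (\<forall>c. (\<Sum>k\<in>K. c k *\<^sub>R v k) = 0 \<longrightarrow> (\<forall>k\<in>K. c k = 0))"

definition simple_polytope :: "'a::euclidean_space set \<Rightarrow> bool" where
  "simple_polytope S \<longleftrightarrow> polytope S \<and>
     (\<forall>x\<in>S. int (card {F. F facet_of S \<and> x \<in> F}) \<le> aff_dim S)"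

definition P_redundant :: "real^'n^'m \<Rightarrow> ('m + 'n) \<Rightarrow> bool" where
  "P_redundant B l \<longleftrightarrow> {x. \<forall>l'. l' \<noteq> l \<longrightarrow> Pineq B l' x} = Ppoly B"

definition Q_redundant :: "real^'n^'m \<Rightarrow> ('m + 'n) \<Rightarrow> bool" where
  "Q_redundant A l \<longleftrightarrow> {y. \<forall>l'. l' \<noteq> l \<longrightarrow> Qineq A l' y} = Qpoly A"

end

theory Submission
  imports Defs
begin


declare transpose_matrix_vector [simp del]

definition polyh :: "'l set \<Rightarrow> ('l \<Rightarrow> 'a::euclidean_space) \<Rightarrow> ('l \<Rightarrow> real) \<Rightarrow> 'a set" where
  "polyh Ls g h = {z. \<forall>l\<in>Ls. inner (g l) z \<le> h l}"

definition bnd :: "'l set \<Rightarrow> ('l \<Rightarrow> 'a::euclidean_space) \<Rightarrow> ('l \<Rightarrow> real) \<Rightarrow> 'a \<Rightarrow> 'l set" where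
  "bnd Ls g h z = {l\<in>Ls. inner (g l) z = h l}"

lemma V1:
  assumes fin: "finite Ls" and z: "z \<in> polyh Ls g h"
    and orth: "\<And>l. l \<in> bnd Ls g h z \<Longrightarrow> inner (g l) w = 0"
  shows "\<exists>e>0. \<forall>t. \<bar>t\<bar> \<le> e \<longrightarrow> z + t *\<^sub>R w \<in> polyh Ls g h"
proof -
  let ?N = "{l\<in>Ls. inner (g l) z \<noteq> h l}"
  define e where "e = Min (insert 1 ((\<lambda>l. (h l - inner (g l) z) / (\<bar>inner (g l) w\<bar> + 1)) ` ?N))"
  have finN: "finite ?N" using fin by auto
  have epos: "e > 0" unfolding e_def
  proof (subst Min_gr_iff)
    show "\<forall>a\<in>insert 1 ((\<lambda>l. (h l - inner (g l) z) / (\<bar>inner (g l) w\<bar> + 1)) ` ?N). 0 < a"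
    proof
      fix a assume "a \<in> insert 1 ((\<lambda>l. (h l - inner (g l) z) / (\<bar>inner (g l) w\<bar> + 1)) ` ?N)"
      then consider "a = 1" | l where "l \<in> ?N" "a = (h l - inner (g l) z) / (\<bar>inner (g l) w\<bar> + 1)" by auto
      then show "0 < a"
      proof cases
        case 2
        then have "inner (g l) z < h l" using z unfolding polyh_def by force
        then show ?thesis using 2 by (simp add: add_pos_nonneg)
      qed simp
    qed
  qed (use finN in auto)
  have "z + t *\<^sub>R w \<in> polyh Ls g h" if t: "\<bar>t\<bar> \<le> e" for t
    unfolding polyh_def
  proof (intro CollectI ballI)
    fix l assume l: "l \<in> Ls"
    show "inner (g l) (z + t *\<^sub>R w) \<le> h l"
    proof (cases "inner (g l) z = h l")
      case True
      then have "l \<in> bnd Ls g h z" using l by (simp add: bnd_def)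
      then show ?thesis using orth[of l] True by (simp add: inner_add_right)
    next
      case False
      then have lN: "l \<in> ?N" using l by auto
      have le: "inner (g l) z \<le> h l" using z l unfolding polyh_def by auto
      have "e \<le> (h l - inner (g l) z) / (\<bar>inner (g l) w\<bar> + 1)"
        unfolding e_def using finN lN by (intro Min_le) auto
      then have "\<bar>t\<bar> \<le> (h l - inner (g l) z) / (\<bar>inner (g l) w\<bar> + 1)" using t by linarith
      then have "\<bar>t\<bar> * (\<bar>inner (g l) w\<bar> + 1) \<le> h l - inner (g l) z"
        by (simp add: pos_le_divide_eq add_nonneg_pos)
      moreover have "t * inner (g l) w \<le> \<bar>t\<bar> * \<bar>inner (g l) w\<bar>"
        by (metis abs_ge_self abs_mult)
      moreover have "\<bar>t\<bar> * \<bar>inner (g l) w\<bar> \<le> \<bar>t\<bar> * (\<bar>inner (g l) w\<bar> + 1)"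
        by (simp add: mult_left_mono)
      ultimately show ?thesis by (simp add: inner_add_right)
    qed
  qed
  then show ?thesis using epos by blast
qed

lemma LA1:
  fixes g :: "'l \<Rightarrow> 'a::euclidean_space"
  assumes fin: "finite K" and nli: "\<not> lin_indep_family g K"
  shows "dim (g ` K) < card K"
proof (cases "inj_on g K")
  case False
  have c1: "card (g ` K) \<le> card K" using fin by (rule card_image_le)
  have c2: "card (g ` K) \<noteq> card K" using False eq_card_imp_inj_on fin by blast
  have "card (g ` K) < card K" using c1 c2 by linarith
  moreover have "dim (g ` K) \<le> card (g ` K)" using fin by (simp add: dim_le_card')
  ultimately show ?thesis by linarith
next
  case True
  from nli obtain c k0 where c: "(\<Sum>k\<in>K. c k *\<^sub>R g k) = 0" and k0: "k0 \<in> K" "c k0 \<noteq> 0"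
    unfolding lin_indep_family_def by blast
  define u where "u = c \<circ> the_inv_into K g"
  have "(\<Sum>v\<in>g ` K. u v *\<^sub>R v) = (\<Sum>k\<in>K. u (g k) *\<^sub>R g k)"
    by (rule sum.reindex[OF True, unfolded comp_def])
  also have "\<dots> = (\<Sum>k\<in>K. c k *\<^sub>R g k)"
    by (rule sum.cong) (auto simp: u_def the_inv_into_f_f[OF True])
  finally have "(\<Sum>v\<in>g ` K. u v *\<^sub>R v) = 0" using c by simp
  moreover have "u (g k0) \<noteq> 0" using k0 by (simp add: u_def the_inv_into_f_f[OF True])
  ultimately have dep: "dependent (g ` K)"
    using fin k0 by (subst dependent_finite) auto
  have "dim (g ` K) \<le> card (g ` K)" using fin by (simp add: dim_le_card')
  moreover have "dim (g ` K) \<noteq> card (g ` K)"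
  proof
    assume e: "dim (g ` K) = card (g ` K)"
    have "independent (g ` K)"
      using card_eq_dim[of "g ` K" "g ` K"] e fin span_superset[of "g ` K"] by simp
    then show False using dep by simp
  qed
  ultimately show ?thesis using card_image[OF True] by linarith
qed

lemma LA2:
  fixes g :: "'l \<Rightarrow> 'a::euclidean_space"
  assumes fin: "finite K" and li: "lin_indep_family g K"
  shows "inj_on g K" "card K = dim (g ` K)"
proof -
  show inj: "inj_on g K"
  proof (rule inj_onI, rule ccontr)
    fix x y assume xy: "x \<in> K" "y \<in> K" "g x = g y" "x \<noteq> y"
    define c where "c = (\<lambda>k. if k = x then (1::real) else if k = y then -1 else 0)"
    have "(\<Sum>k\<in>K. c k *\<^sub>R g k) = (\<Sum>k\<in>{x,y}. c k *\<^sub>R g k)"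
      using fin xy by (intro sum.mono_neutral_right) (auto simp: c_def)
    also have "\<dots> = 0" using xy by (simp add: c_def)
    finally have "c x = 0" using li xy unfolding lin_indep_family_def by blast
    then show False by (simp add: c_def)
  qed
  have "independent (g ` K)"
  proof
    assume "dependent (g ` K)"
    then obtain u v where u: "v \<in> g ` K" "u v \<noteq> 0" "(\<Sum>v\<in>g ` K. u v *\<^sub>R v) = 0"
      using fin by (auto simp: dependent_finite)
    have "(\<Sum>k\<in>K. u (g k) *\<^sub>R g k) = 0" using u(3) sum.reindex[OF inj, of "\<lambda>v. u v *\<^sub>R v"] by simp
    then have "\<forall>k\<in>K. u (g k) = 0"
      using li[unfolded lin_indep_family_def, THEN spec, of "\<lambda>k. u (g k)"] by simp
    then show False using u by auto
  qed
  then have "dim (g ` K) = card (g ` K)" using dim_span_eq_card_independent[of "g ` K"] by simp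
  then show "card K = dim (g ` K)" using card_image[OF inj] by simp
qed

lemma LA3:
  fixes A B :: "'a::euclidean_space set"
  assumes "finite B"
  shows "dim (A \<union> B) \<le> dim A + card B"
  using assms
proof (induction B rule: finite_induct)
  case (insert b B)
  have "dim (A \<union> insert b B) = dim (insert b (A \<union> B))" by simp
  also have "\<dots> \<le> dim (A \<union> B) + 1" by (simp add: dim_insert)
  finally show ?case using insert by simp
qed simp



lemma bounded_line_exit:
  fixes z w :: "'a::euclidean_space"
  assumes "bounded S" "w \<noteq> 0"
  shows "\<exists>t. z + t *\<^sub>R w \<notin> S"
proof -
  obtain M where M: "\<And>x. x \<in> S \<Longrightarrow> norm x \<le> M" using assms(1) bounded_iff by blast
  define t where "t = (\<bar>M\<bar> + norm z + 1) / norm w"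
  have nw: "norm w > 0" using assms(2) by simp
  have t0: "t \<ge> 0" unfolding t_def using nw by (intro divide_nonneg_pos) auto
  have "norm (t *\<^sub>R w) = t * norm w" using t0 by simp
  also have "\<dots> = \<bar>M\<bar> + norm z + 1" unfolding t_def using nw by simp
  finally have e: "norm (t *\<^sub>R w) = \<bar>M\<bar> + norm z + 1" .
  have "norm (t *\<^sub>R w) = norm ((z + t *\<^sub>R w) - z)" by simp
  also have "\<dots> \<le> norm (z + t *\<^sub>R w) + norm z" by (rule norm_triangle_ineq4)
  finally have "norm (z + t *\<^sub>R w) > M" using e by linarith
  then have "z + t *\<^sub>R w \<notin> S" using M by (meson not_le)
  then show ?thesis by blast
qed

lemma V2:
  fixes g :: "'l \<Rightarrow> 'a::euclidean_space"
  assumes fin: "finite Ls" and bd: "bounded (polyh Ls g h)"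
  shows "z \<in> polyh Ls g h \<Longrightarrow> \<exists>z'\<in>polyh Ls g h. bnd Ls g h z \<subseteq> bnd Ls g h z' \<and> span (g ` bnd Ls g h z') = UNIV"
proof (induction "DIM('a) - dim (g ` bnd Ls g h z)" arbitrary: z rule: less_induct)
  case less
  note z = less.prems
  show ?case
  proof (cases "dim (g ` bnd Ls g h z) = DIM('a)")
    case True
    then show ?thesis using z dim_eq_full by blast
  next
    case False
    then have "dim (g ` bnd Ls g h z) < DIM('a)" using dim_subset_UNIV le_neq_implies_less by blast
    then obtain w where w0: "w \<noteq> 0" and wo: "\<And>y. y \<in> span (g ` bnd Ls g h z) \<Longrightarrow> orthogonal w y"
      using orthogonal_to_subspace_exists by blast
    have wb: "inner (g l) w = 0" if "l \<in> bnd Ls g h z" for l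
      using wo[of "g l"] that span_base[of "g l"] by (simp add: orthogonal_def inner_commute)
    have "\<exists>l\<in>Ls. inner (g l) w \<noteq> 0"
    proof (rule ccontr)
      assume "\<not> ?thesis"
      then have all0: "\<And>l. l \<in> Ls \<Longrightarrow> inner (g l) w = 0" by blast
      have "z + t *\<^sub>R w \<in> polyh Ls g h" for t
        using z all0 by (simp add: polyh_def inner_add_right)
      then show False using bounded_line_exit[OF bd w0, of z] by blast
    qed
    then obtain w' where w'0: "\<exists>l\<in>Ls. inner (g l) w' > 0"
      and w'b: "\<And>l. l \<in> bnd Ls g h z \<Longrightarrow> inner (g l) w' = 0"
      and w'o: "\<And>y. y \<in> span (g ` bnd Ls g h z) \<Longrightarrow> inner w' y = 0"
    proof -
      obtain l where l: "l \<in> Ls" "inner (g l) w \<noteq> 0" using \<open>\<exists>l\<in>Ls. inner (g l) w \<noteq> 0\<close> by blast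
      show ?thesis
      proof (cases "inner (g l) w > 0")
        case True
        show ?thesis by (rule that[of w]) (use True l wb wo in \<open>auto simp: orthogonal_def\<close>)
      next
        case False
        then have "inner (g l) (-w) > 0" using l by simp
        show ?thesis
          by (rule that[of "-w"]) (use \<open>inner (g l) (-w) > 0\<close> l wb wo in \<open>auto simp: orthogonal_def\<close>)
      qed
    qed
    define T where "T = {l\<in>Ls. inner (g l) w' > 0}"
    define r where "r = (\<lambda>l. (h l - inner (g l) z) / inner (g l) w')"
    have finT: "finite T" "T \<noteq> {}" using fin w'0 by (auto simp: T_def)
    define t where "t = Min (r ` T)"
    have "t \<in> r ` T" using finT unfolding t_def by (intro Min_in) auto
    then obtain ls where ls: "ls \<in> T" "r ls = t" by auto
    have tle: "t \<le> r l" if "l \<in> T" for l using finT that unfolding t_def by simp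
    have rnn: "r l \<ge> 0" if "l \<in> T" for l
      using that z unfolding T_def r_def polyh_def by (auto intro: divide_nonneg_pos)
    have t0: "t \<ge> 0" using rnn[OF ls(1)] ls(2) by simp
    define z' where "z' = z + t *\<^sub>R w'"
    have z'P: "z' \<in> polyh Ls g h" unfolding polyh_def
    proof (intro CollectI ballI)
      fix l assume l: "l \<in> Ls"
      have zl: "inner (g l) z \<le> h l" using z l by (simp add: polyh_def)
      show "inner (g l) z' \<le> h l"
      proof (cases "l \<in> T")
        case True
        then have pos: "inner (g l) w' > 0" by (simp add: T_def)
        have "t * inner (g l) w' \<le> r l * inner (g l) w'"
          using tle[OF True] pos by (simp add: mult_right_mono)
        also have "\<dots> = h l - inner (g l) z" using pos by (simp add: r_def)
        finally show ?thesis by (simp add: z'_def inner_add_right)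
      next
        case False
        then have "inner (g l) w' \<le> 0" using l by (simp add: T_def)
        then have "t * inner (g l) w' \<le> 0" using t0 by (simp add: mult_nonneg_nonpos)
        then show ?thesis using zl by (simp add: z'_def inner_add_right)
      qed
    qed
    have sub: "bnd Ls g h z \<subseteq> bnd Ls g h z'"
      using w'b by (auto simp: bnd_def z'_def inner_add_right)
    have lsb: "ls \<in> bnd Ls g h z'"
    proof -
      have pos: "inner (g ls) w' > 0" using ls(1) by (simp add: T_def)
      have "inner (g ls) z' = inner (g ls) z + r ls * inner (g ls) w'"
        using ls(2) by (simp add: z'_def inner_add_right)
      also have "\<dots> = h ls" using pos by (simp add: r_def)
      finally show ?thesis using ls(1) by (simp add: bnd_def T_def)
    qed
    have notspan: "g ls \<notin> span (g ` bnd Ls g h z)"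
      using w'o[of "g ls"] ls(1) by (auto simp: T_def inner_commute)
    have "dim (g ` bnd Ls g h z) + 1 = dim (insert (g ls) (g ` bnd Ls g h z))"
      using notspan by (simp add: dim_insert)
    also have "\<dots> \<le> dim (g ` bnd Ls g h z')"
      using sub lsb by (intro dim_subset) auto
    finally have "dim (g ` bnd Ls g h z) < dim (g ` bnd Ls g h z')" by simp
    moreover have "dim (g ` bnd Ls g h z') \<le> DIM('a)" by (rule dim_subset_UNIV)
    ultimately have "DIM('a) - dim (g ` bnd Ls g h z') < DIM('a) - dim (g ` bnd Ls g h z)"
      by linarith
    from less.hyps[OF this z'P] obtain z'' where "z'' \<in> polyh Ls g h"
      "bnd Ls g h z' \<subseteq> bnd Ls g h z''" "span (g ` bnd Ls g h z'') = UNIV" by blast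
    then show ?thesis using sub by blast
  qed
qed

lemma V3:
  fixes g :: "'l \<Rightarrow> 'a::euclidean_space"
  assumes fin: "finite Ls" and bd: "bounded (polyh Ls g h)" and z: "z \<in> polyh Ls g h"
    and nli: "\<not> lin_indep_family g (bnd Ls g h z)"
  shows "\<exists>z'\<in>polyh Ls g h. card (bnd Ls g h z') > DIM('a)"
proof -
  obtain z' where z': "z' \<in> polyh Ls g h" "bnd Ls g h z \<subseteq> bnd Ls g h z'"
    "span (g ` bnd Ls g h z') = UNIV" using V2[OF fin bd z] by blast
  let ?K = "bnd Ls g h z" and ?K' = "bnd Ls g h z'"
  have finK: "finite ?K" "finite ?K'" using fin by (auto simp: bnd_def)
  have "DIM('a) = dim (g ` ?K')" using z'(3) dim_eq_full by metis
  also have "g ` ?K' = g ` ?K \<union> g ` (?K' - ?K)" using z'(2) by blast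
  also have "dim \<dots> \<le> dim (g ` ?K) + card (g ` (?K' - ?K))"
    using finK by (intro LA3) auto
  also have "card (g ` (?K' - ?K)) \<le> card (?K' - ?K)" using finK by (intro card_image_le) auto
  also have "dim (g ` ?K) < card ?K" using LA1[OF finK(1) nli] .
  also have "card ?K + card (?K' - ?K) = card ?K'"
  proof -
    have "card ?K \<le> card ?K'" using finK z'(2) by (intro card_mono) auto
    moreover have "card (?K' - ?K) = card ?K' - card ?K" using finK z'(2) by (intro card_Diff_subset) auto
    ultimately show ?thesis by linarith
  qed
  finally show ?thesis using z'(1) by auto
qed



definition gP :: "real^'n^'m \<Rightarrow> 'm + 'n \<Rightarrow> real^'m" where
  "gP B l = (case l of Inl i \<Rightarrow> - axis i 1 | Inr j \<Rightarrow> column j B)"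

definition hP :: "'m + 'n \<Rightarrow> real" where
  "hP l = (case l of Inl i \<Rightarrow> 0 | Inr j \<Rightarrow> 1)"

definition ndP :: "real^'n^'m \<Rightarrow> bool" where
  "ndP B \<longleftrightarrow> (\<forall>x\<in>mixed. card (bestresp2 B x) \<le> card (supp x))"

definition bP :: "real^'n^'m \<Rightarrow> bool" where
  "bP B \<longleftrightarrow> (\<forall>x\<in>Ppoly B. card (labelsP B x) \<le> CARD('m))"

lemma inner_column: "inner (column j B) x = (transpose B *v x) $ j"
  by (simp add: inner_vec_def column_def transpose_def matrix_vector_mult_def mult.commute)

lemma inner_gP: "inner (gP B l) x = (case l of Inl i \<Rightarrow> - (x $ i) | Inr j \<Rightarrow> (transpose B *v x) $ j)"
  by (cases l) (simp_all add: gP_def inner_column inner_axis')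

lemma Pineq_iff: "Pineq B l x \<longleftrightarrow> inner (gP B l) x \<le> hP l"
  by (cases l) (auto simp: Pineq_def inner_gP hP_def)

lemma Pbind_iff: "Pbind B l x \<longleftrightarrow> inner (gP B l) x = hP l"
  by (cases l) (auto simp: Pbind_def inner_gP hP_def)

lemma Ppoly_eq: "Ppoly B = polyh UNIV (gP B) hP"
  by (auto simp: Ppoly_def polyh_def Pineq_iff)

lemma labelsP_eq: "labelsP B x = bnd UNIV (gP B) hP x"
  by (auto simp: labelsP_def bnd_def Pbind_iff)

lemma labelsP_split: "labelsP B x = Inl ` {i. x $ i = 0} \<union> Inr ` {j. (transpose B *v x) $ j = 1}"
proof (rule set_eqI)
  fix l show "l \<in> labelsP B x \<longleftrightarrow> l \<in> Inl ` {i. x $ i = 0} \<union> Inr ` {j. (transpose B *v x) $ j = 1}"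
    by (cases l) (auto simp: labelsP_def Pbind_def)
qed

lemma card_split: "card (Inl ` (X::'a::finite set) \<union> Inr ` (Y::'b::finite set)) = card X + card Y"
  by (subst card_Un_disjoint) (auto simp: card_image)

lemma card_labelsP: "card (labelsP B x) = card {i. x $ i = 0} + card {j. (transpose B *v x) $ j = 1}"
  unfolding labelsP_split by (rule card_split)

lemma all_sum: "(\<forall>l. P l) \<longleftrightarrow> (\<forall>i. P (Inl i)) \<and> (\<forall>j. P (Inr j))"
  by (metis sum.exhaust)

lemma in_Ppoly: "x \<in> Ppoly B \<longleftrightarrow> (\<forall>i. 0 \<le> x $ i) \<and> (\<forall>j. (transpose B *v x) $ j \<le> 1)"
  unfolding Ppoly_def mem_Collect_eq all_sum[of "\<lambda>l. Pineq B l x"] by (simp add: Pineq_def)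

lemma card_zero_supp:
  fixes x :: "real^'m"
  assumes "\<forall>i. 0 \<le> x $ i"
  shows "card {i. x $ i = 0} + card (supp x) = CARD('m)"
proof -
  have d: "{i. x $ i = 0} \<inter> supp x = {}" by (auto simp: supp_def)
  have u: "{i. x $ i = 0} \<union> supp x = UNIV"
  proof (rule set_eqI)
    fix i show "i \<in> {i. x $ i = 0} \<union> supp x \<longleftrightarrow> i \<in> UNIV"
      using assms[rule_format, of i] by (auto simp: supp_def)
  qed
  have "card ({i. x $ i = 0} \<union> supp x) = card {i. x $ i = 0} + card (supp x)"
    using d by (intro card_Un_disjoint) auto
  then show ?thesis using u by simp
qed

lemma ray_exit:
  fixes w :: "'a::euclidean_space"
  assumes "bounded S" "w \<noteq> 0"
  shows "\<exists>t\<ge>0. t *\<^sub>R w \<notin> S"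
proof -
  obtain M where M: "\<And>x. x \<in> S \<Longrightarrow> norm x \<le> M" using assms(1) bounded_iff by blast
  define t where "t = (\<bar>M\<bar> + 1) / norm w"
  have nw: "norm w > 0" using assms(2) by simp
  have t0: "t \<ge> 0" unfolding t_def using nw by (intro divide_nonneg_pos) auto
  have "norm (t *\<^sub>R w) = t * norm w" using t0 by simp
  also have "\<dots> = \<bar>M\<bar> + 1" unfolding t_def using nw by simp
  finally have "norm (t *\<^sub>R w) > M" by linarith
  then have "t *\<^sub>R w \<notin> S" using M by (meson not_le)
  then show ?thesis using t0 by blast
qed

lemma posP:
  fixes B :: "real^'n^'m"
  assumes poly: "polytope (Ppoly B)" and x0: "\<forall>i. 0 \<le> x $ i" and xn: "x \<noteq> 0"
  shows "\<exists>j. (transpose B *v x) $ j > 0"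
proof (rule ccontr)
  assume "\<not> ?thesis"
  then have le: "\<And>j. (transpose B *v x) $ j \<le> 0" by (simp add: not_less)
  have "t *\<^sub>R x \<in> Ppoly B" if "t \<ge> 0" for t
  proof -
    have "(transpose B *v (t *\<^sub>R x)) $ j \<le> 1" for j
    proof -
      have "t * (transpose B *v x) $ j \<le> 0" using mult_nonneg_nonpos[OF that le[of j]] .
      then show ?thesis by (simp add: matrix_vector_mult_scaleR)
    qed
    then show ?thesis using x0 that by (simp add: in_Ppoly)
  qed
  then show False using ray_exit[OF polytope_imp_bounded[OF poly] xn] by blast
qed

lemma mixed_nonneg: "x \<in> mixed \<Longrightarrow> 0 \<le> x $ i"
  by (simp add: mixed_def)

lemma mixed_nonzero: "x \<in> mixed \<Longrightarrow> x \<noteq> 0"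
  by (auto simp: mixed_def)

lemma Max_range_eq:
  fixes f :: "'a::finite \<Rightarrow> real"
  assumes "\<And>k. f k \<le> M" "f k0 = M"
  shows "Max (range f) = M"
  using assms by (intro Max_eqI) auto

lemma Max_range_ge: "f k \<le> Max (range (f::'a::finite \<Rightarrow> real))"
  by (intro Max_ge) auto

lemma Max_range_in: "\<exists>k. f k = Max (range (f::'a::finite \<Rightarrow> real))"
proof -
  have "Max (range f) \<in> range f" by (intro Max_in) auto
  then show ?thesis by (metis rangeE)
qed

lemma sum_pos_nonneg:
  fixes x :: "real^'m"
  assumes "\<forall>i. 0 \<le> x $ i" "x \<noteq> 0"
  shows "(\<Sum>i\<in>UNIV. x $ i) > 0"
proof -
  obtain i where "x $ i \<noteq> 0" using assms(2) by (metis vec_eq_iff zero_index)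
  then have "x $ i > 0" using assms(1) by (metis less_eq_real_def)
  moreover have "x $ i \<le> (\<Sum>i\<in>UNIV. x $ i)"
    using assms(1) by (intro member_le_sum) auto
  ultimately show ?thesis by linarith
qed

lemma normalize_mixed:
  fixes x :: "real^'m"
  assumes "\<forall>i. 0 \<le> x $ i" "x \<noteq> 0"
  shows "(1 / (\<Sum>i\<in>UNIV. x $ i)) *\<^sub>R x \<in> mixed" "supp ((1 / (\<Sum>i\<in>UNIV. x $ i)) *\<^sub>R x) = supp x"
proof -
  have s: "(\<Sum>i\<in>UNIV. x $ i) > 0" by (rule sum_pos_nonneg[OF assms])
  show "(1 / (\<Sum>i\<in>UNIV. x $ i)) *\<^sub>R x \<in> mixed"
    using s assms(1) by (simp add: mixed_def sum_divide_distrib[symmetric])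
  show "supp ((1 / (\<Sum>i\<in>UNIV. x $ i)) *\<^sub>R x) = supp x"
    using s by (auto simp: supp_def zero_less_mult_iff zero_less_divide_iff)
qed

lemma BR:
  fixes B :: "real^'n^'m"
  assumes nd: "ndP B" and x0: "\<forall>i. 0 \<le> x $ i" and leM: "\<And>j. (transpose B *v x) $ j \<le> M"
    and M0: "M > 0"
  shows "card {j. (transpose B *v x) $ j = M} \<le> card (supp x)"
proof (cases "{j. (transpose B *v x) $ j = M} = {}")
  case True then show ?thesis by simp
next
  case False
  then obtain j0 where j0: "(transpose B *v x) $ j0 = M" by auto
  have xn: "x \<noteq> 0"
  proof
    assume "x = 0" then show False using j0 M0 by simp
  qed
  define s where "s = (\<Sum>i\<in>UNIV. x $ i)"
  have s0: "s > 0" unfolding s_def by (rule sum_pos_nonneg[OF x0 xn])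
  define xh where "xh = (1 / s) *\<^sub>R x"
  have xh: "xh \<in> mixed" "supp xh = supp x" using normalize_mixed[OF x0 xn] by (simp_all add: xh_def s_def)
  have bx: "(transpose B *v xh) $ j = (transpose B *v x) $ j / s" for j
    by (simp add: xh_def matrix_vector_mult_scaleR)
  have mx: "Max (range (\<lambda>k. (transpose B *v xh) $ k)) = M / s"
  proof (rule Max_range_eq[of _ _ j0])
    fix k show "(transpose B *v xh) $ k \<le> M / s" unfolding bx using leM[of k] s0 by (simp add: divide_right_mono)
  next
    show "(transpose B *v xh) $ j0 = M / s" unfolding bx using j0 by simp
  qed
  have "bestresp2 B xh = {j. (transpose B *v xh) $ j = M / s}" unfolding bestresp2_def mx ..
  also have "\<dots> = {j. (transpose B *v x) $ j = M}" using s0 by (auto simp: bx)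
  finally have "bestresp2 B xh = {j. (transpose B *v x) $ j = M}" .
  then show ?thesis using nd xh unfolding ndP_def by metis
qed

lemma scale_to_P:
  fixes B :: "real^'n^'m"
  assumes poly: "polytope (Ppoly B)" and xh: "xh \<in> mixed"
  defines "M \<equiv> Max (range (\<lambda>k. (transpose B *v xh) $ k))"
  shows "M > 0" "(1 / M) *\<^sub>R xh \<in> Ppoly B" "labelsP B ((1 / M) *\<^sub>R xh) = labelsX B xh"
proof -
  obtain j where "(transpose B *v xh) $ j > 0"
    using posP[OF poly] mixed_nonneg[OF xh] mixed_nonzero[OF xh] by blast
  then show M0: "M > 0" unfolding M_def using Max_range_ge[of "\<lambda>k. (transpose B *v xh) $ k" j] by linarith
  have le: "(transpose B *v xh) $ k \<le> M" for k unfolding M_def by (rule Max_range_ge)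
  show "(1 / M) *\<^sub>R xh \<in> Ppoly B"
    using M0 le mixed_nonneg[OF xh] by (simp add: in_Ppoly matrix_vector_mult_scaleR)
  have z: "{i. ((1 / M) *\<^sub>R xh) $ i = 0} = {i. xh $ i = 0}" using M0 by auto
  have "{j. (transpose B *v ((1 / M) *\<^sub>R xh)) $ j = 1} = {j. (transpose B *v xh) $ j = M}"
    using M0 by (auto simp: matrix_vector_mult_scaleR)
  also have "\<dots> = bestresp2 B xh" unfolding bestresp2_def M_def ..
  finally show "labelsP B ((1 / M) *\<^sub>R xh) = labelsX B xh"
    unfolding labelsP_split labelsX_def z by simp
qed

lemma P1:
  fixes B :: "real^'n^'m"
  assumes poly: "polytope (Ppoly B)"
  shows "bP B \<longleftrightarrow> ndP B"
proof
  assume b: "bP B"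
  show "ndP B" unfolding ndP_def
  proof
    fix xh :: "real^'m" assume xh: "xh \<in> mixed"
    note sc = scale_to_P[OF poly xh]
    have "card (labelsX B xh) \<le> CARD('m)" using b sc unfolding bP_def by metis
    moreover have "card (labelsX B xh) = card {i. xh $ i = 0} + card (bestresp2 B xh)"
      unfolding labelsX_def by (rule card_split)
    moreover have "card {i. xh $ i = 0} + card (supp xh) = CARD('m)"
      using mixed_nonneg[OF xh] by (intro card_zero_supp) auto
    ultimately show "card (bestresp2 B xh) \<le> card (supp xh)" by linarith
  qed
next
  assume nd: "ndP B"
  show "bP B" unfolding bP_def
  proof
    fix x assume x: "x \<in> Ppoly B"
    then have x0: "\<forall>i. 0 \<le> x $ i" and x1: "\<And>j. (transpose B *v x) $ j \<le> 1" by (auto simp: in_Ppoly)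
    have "card {j. (transpose B *v x) $ j = 1} \<le> card (supp x)"
      by (rule BR[OF nd x0 x1]) simp
    moreover have "card {i. x $ i = 0} + card (supp x) = CARD('m)" by (rule card_zero_supp[OF x0])
    ultimately show "card (labelsP B x) \<le> CARD('m)" unfolding card_labelsP by linarith
  qed
qed



lemma bounded_Ppoly: "polytope (Ppoly B) \<Longrightarrow> bounded (polyh UNIV (gP B) hP)"
  using polytope_imp_bounded Ppoly_eq by metis

lemma LIP:
  fixes B :: "real^'n^'m"
  assumes poly: "polytope (Ppoly B)" and nd: "ndP B" and x: "x \<in> Ppoly B"
  shows "lin_indep_family (gP B) (labelsP B x)"
proof (rule ccontr)
  assume "\<not> ?thesis"
  then have "\<not> lin_indep_family (gP B) (bnd UNIV (gP B) hP x)" by (simp add: labelsP_eq)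
  from V3[OF _ bounded_Ppoly[OF poly] _ this] x
  obtain x' where "x' \<in> polyh UNIV (gP B) hP" "card (bnd UNIV (gP B) hP x') > DIM(real^'m)"
    by (auto simp: Ppoly_eq)
  then have "x' \<in> Ppoly B" "card (labelsP B x') > CARD('m)" by (simp_all add: Ppoly_eq labelsP_eq)
  then show False using P1[OF poly] nd unfolding bP_def by fastforce
qed

lemma sum_Inl_Inr:
  fixes f :: "'a + 'b \<Rightarrow> 'c::comm_monoid_add"
  assumes "finite Z" "finite J"
  shows "(\<Sum>l\<in>Inl ` Z \<union> Inr ` J. f l) = (\<Sum>i\<in>Z. f (Inl i)) + (\<Sum>j\<in>J. f (Inr j))"
proof -
  have "(\<Sum>l\<in>Inl ` Z \<union> Inr ` J. f l) = (\<Sum>l\<in>Inl ` Z. f l) + (\<Sum>l\<in>Inr ` J. f l)"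
    using assms by (intro sum.union_disjoint) auto
  also have "(\<Sum>l\<in>Inl ` Z. f l) = (\<Sum>i\<in>Z. f (Inl i))" by (simp add: sum.reindex)
  also have "(\<Sum>l\<in>Inr ` J. f l) = (\<Sum>j\<in>J. f (Inr j))" by (simp add: sum.reindex)
  finally show ?thesis .
qed

lemma dep_P:
  fixes B :: "real^'n^'m" and Z :: "'m set" and J :: "'n set"
  assumes c: "(\<Sum>j\<in>J. c j *\<^sub>R (\<chi> i. if i \<notin> Z then B $ i $ j else 0)) = 0"
    and jj: "jj \<in> J" "c jj \<noteq> 0"
  shows "\<not> lin_indep_family (gP B) (Inl ` Z \<union> Inr ` J)"
proof
  assume li: "lin_indep_family (gP B) (Inl ` Z \<union> Inr ` J)"
  define d where "d = (\<lambda>l. case l of Inl i \<Rightarrow> (\<Sum>j\<in>J. c j * B $ i $ j) | Inr j \<Rightarrow> c j)"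
  have ck: "(\<Sum>j\<in>J. c j * B $ k $ j) = 0" if "k \<notin> Z" for k
  proof -
    have "(\<Sum>j\<in>J. c j *\<^sub>R (\<chi> i. if i \<notin> Z then B $ i $ j else 0)) $ k = 0" using c by simp
    then show ?thesis using that by simp
  qed
  have "(\<Sum>l\<in>Inl ` Z \<union> Inr ` J. d l *\<^sub>R gP B l) = 0"
  proof -
    have "(\<Sum>l\<in>Inl ` Z \<union> Inr ` J. d l *\<^sub>R gP B l)
        = (\<Sum>i\<in>Z. d (Inl i) *\<^sub>R gP B (Inl i)) + (\<Sum>j\<in>J. d (Inr j) *\<^sub>R gP B (Inr j))"
      by (rule sum_Inl_Inr) auto
    also have "\<dots> = 0"
    proof (subst vec_eq_iff, intro allI)
      fix k
      have a: "(\<Sum>i\<in>Z. d (Inl i) *\<^sub>R gP B (Inl i)) $ k = (if k \<in> Z then - (\<Sum>j\<in>J. c j * B $ k $ j) else 0)"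
        by (simp add: gP_def d_def axis_def if_distrib sum.delta cong: if_cong)
      have b: "(\<Sum>j\<in>J. d (Inr j) *\<^sub>R gP B (Inr j)) $ k = (\<Sum>j\<in>J. c j * B $ k $ j)"
        by (simp add: gP_def d_def column_def)
      show "((\<Sum>i\<in>Z. d (Inl i) *\<^sub>R gP B (Inl i)) + (\<Sum>j\<in>J. d (Inr j) *\<^sub>R gP B (Inr j))) $ k = 0 $ k"
        using ck[of k] by (simp only: vector_add_component a b) simp
    qed
    finally show ?thesis .
  qed
  then have "d (Inr jj) = 0" using li jj unfolding lin_indep_family_def by blast
  then show False using jj by (simp add: d_def)
qed

lemma vec_in_span_axes:
  fixes v :: "real^'m"
  assumes "\<And>i. i \<notin> S \<Longrightarrow> v $ i = 0"
  shows "v \<in> span ((\<lambda>i. axis i 1) ` S)"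
proof -
  have "v = (\<Sum>i\<in>S. v $ i *\<^sub>R axis i 1)"
  proof (subst vec_eq_iff, intro allI)
    fix k show "v $ k = (\<Sum>i\<in>S. v $ i *\<^sub>R axis i 1) $ k"
      using assms[of k] by (simp add: axis_def if_distrib sum.delta cong: if_cong)
  qed
  also have "\<dots> \<in> span ((\<lambda>i. axis i 1) ` S)"
    by (intro span_sum span_mul span_base) auto
  finally show ?thesis .
qed

lemma P2:
  fixes B :: "real^'n^'m"
  assumes poly: "polytope (Ppoly B)"
  shows "ndP B \<longleftrightarrow> (\<forall>xh\<in>mixed. lin_indep_family (\<lambda>j. \<chi> i. if i \<in> supp xh then B $ i $ j else 0)
                           (bestresp2 B xh))"
proof
  assume nd: "ndP B"
  show "\<forall>xh\<in>mixed. lin_indep_family (\<lambda>j. \<chi> i. if i \<in> supp xh then B $ i $ j else 0) (bestresp2 B xh)"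
  proof (intro ballI, rule ccontr)
    fix xh :: "real^'m" assume xh: "xh \<in> mixed"
      and nli: "\<not> lin_indep_family (\<lambda>j. \<chi> i. if i \<in> supp xh then B $ i $ j else 0) (bestresp2 B xh)"
    let ?Z = "{i. xh $ i = 0}"
    have sZ: "i \<in> supp xh \<longleftrightarrow> i \<notin> ?Z" for i
      using mixed_nonneg[OF xh, of i] by (auto simp: supp_def)
    from nli obtain c j0 where c: "(\<Sum>j\<in>bestresp2 B xh. c j *\<^sub>R (\<chi> i. if i \<in> supp xh then B $ i $ j else 0)) = 0"
      and j0: "j0 \<in> bestresp2 B xh" "c j0 \<noteq> 0"
      unfolding lin_indep_family_def by blast
    have "\<not> lin_indep_family (gP B) (Inl ` ?Z \<union> Inr ` bestresp2 B xh)"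
      by (rule dep_P[where jj=j0 and c=c, OF _ j0]) (use c in \<open>simp add: sZ\<close>)
    moreover note sc = scale_to_P[OF poly xh]
    ultimately show False
      using LIP[OF poly nd sc(2)] sc(3) unfolding labelsX_def by simp
  qed
next
  assume li: "\<forall>xh\<in>mixed. lin_indep_family (\<lambda>j. \<chi> i. if i \<in> supp xh then B $ i $ j else 0) (bestresp2 B xh)"
  show "ndP B" unfolding ndP_def
  proof
    fix xh :: "real^'m" assume xh: "xh \<in> mixed"
    let ?v = "\<lambda>j. (\<chi> i. if i \<in> supp xh then B $ i $ j else 0) :: real^'m"
    have l: "lin_indep_family ?v (bestresp2 B xh)" using li xh by blast
    have "card (bestresp2 B xh) = dim (?v ` bestresp2 B xh)" using LA2(2)[OF _ l] by simp
    also have "\<dots> \<le> card ((\<lambda>i. axis i (1::real)) ` supp xh)"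
      by (rule dim_le_card) (auto intro!: vec_in_span_axes)
    also have "\<dots> \<le> card (supp xh)" by (rule card_image_le) simp
    finally show "card (bestresp2 B xh) \<le> card (supp xh)" .
  qed
qed



lemma dim_perp:
  fixes U :: "'a::euclidean_space set"
  assumes U: "subspace U"
  shows "dim U + dim (U\<^sup>\<bottom>) = DIM('a)"
proof -
  have "dim (U \<union> U\<^sup>\<bottom>) = dim U + dim (U\<^sup>\<bottom>)"
    by (rule dim_orthogonal_sum) (auto simp: orthogonal_comp_def orthogonal_def)
  moreover have "span (U \<union> U\<^sup>\<bottom>) = UNIV"
  proof -
    have "v \<in> span (U \<union> U\<^sup>\<bottom>)" for v
    proof -
      have "v \<in> U + U\<^sup>\<bottom>" using subspace_sum_orthogonal_comp[OF U] by simp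
      then obtain a b where "a \<in> U" "b \<in> U\<^sup>\<bottom>" "v = a + b" by (meson set_plus_elim)
      moreover have "a \<in> span (U \<union> U\<^sup>\<bottom>)" "b \<in> span (U \<union> U\<^sup>\<bottom>)"
        using \<open>a \<in> U\<close> \<open>b \<in> U\<^sup>\<bottom>\<close> by (auto intro: span_base)
      ultimately show ?thesis by (simp add: span_add)
    qed
    then show ?thesis by auto
  qed
  then have "dim (U \<union> U\<^sup>\<bottom>) = DIM('a)" using dim_eq_full by metis
  ultimately show ?thesis by simp
qed

lemma affine_H: "affine {y. \<forall>l\<in>I. inner (g l) y = h l}"
proof -
  have e: "{y. \<forall>l\<in>I. inner (g l) y = h l} = \<Inter> ((\<lambda>l. {y. inner (g l) y = h l}) ` I)" by auto
  show ?thesis unfolding e by (rule affine_Inter) (auto simp: affine_hyperplane)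
qed

lemma AFFH:
  fixes g :: "'l \<Rightarrow> 'a::euclidean_space"
  assumes fin: "finite I" and li: "lin_indep_family g I" and x: "\<forall>l\<in>I. inner (g l) x = h l"
  shows "aff_dim {y. \<forall>l\<in>I. inner (g l) y = h l} = int (DIM('a) - card I)"
proof -
  let ?H = "{y. \<forall>l\<in>I. inner (g l) y = h l}"
  define N where "N = (span (g ` I))\<^sup>\<bottom>"
  have N: "w \<in> N \<longleftrightarrow> (\<forall>l\<in>I. inner (g l) w = 0)" for w
  proof
    assume "w \<in> N"
    then show "\<forall>l\<in>I. inner (g l) w = 0"
      by (auto simp: N_def orthogonal_comp_def orthogonal_def intro: span_base)
  next
    assume a: "\<forall>l\<in>I. inner (g l) w = 0"
    have "orthogonal a w" if "a \<in> span (g ` I)" for a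
    proof -
      have "orthogonal w a"
        by (rule orthogonal_to_span[OF that]) (use a in \<open>auto simp: orthogonal_def inner_commute\<close>)
      then show ?thesis by (simp add: orthogonal_commute)
    qed
    then show "w \<in> N" by (simp add: N_def orthogonal_comp_def)
  qed
  have H: "?H = (+) x ` N"
  proof (rule set_eqI)
    fix y
    show "y \<in> ?H \<longleftrightarrow> y \<in> (+) x ` N"
    proof
      assume "y \<in> ?H"
      then have "y - x \<in> N" using x by (simp add: N inner_diff_right)
      then show "y \<in> (+) x ` N" by (rule image_eqI[rotated]) simp
    next
      assume "y \<in> (+) x ` N"
      then obtain w where "w \<in> N" "y = x + w" by auto
      then show "y \<in> ?H" using x by (simp add: N inner_add_right)
    qed
  qed
  have "aff_dim ?H = aff_dim N" unfolding H by (rule aff_dim_translation_eq)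
  also have "\<dots> = int (dim N)" by (simp add: N_def aff_dim_subspace subspace_orthogonal_comp)
  also have "dim N = DIM('a) - dim (span (g ` I))"
    using dim_perp[of "span (g ` I)"] unfolding N_def by (simp add: subspace_span)
  also have "dim (span (g ` I)) = card I" using LA2(2)[OF fin li] by simp
  finally show ?thesis .
qed

lemma PI_eq: "PI B I = Ppoly B \<inter> {y. \<forall>l\<in>I. inner (gP B l) y = hP l}"
  by (auto simp: PI_def labelsP_def Pbind_iff)

lemma P3:
  fixes B :: "real^'n^'m"
  assumes poly: "polytope (Ppoly B)"
  shows "ndP B \<longleftrightarrow> (\<forall>xh\<in>mixed. aff_dim (PI B (labelsX B xh)) = int CARD('m) - int (card (labelsX B xh)))"
proof
  assume nd: "ndP B"
  show "\<forall>xh\<in>mixed. aff_dim (PI B (labelsX B xh)) = int CARD('m) - int (card (labelsX B xh))"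
  proof
    fix xh :: "real^'m" assume xh: "xh \<in> mixed"
    note sc = scale_to_P[OF poly xh]
    define x where "x = (1 / Max (range (\<lambda>k. (transpose B *v xh) $ k))) *\<^sub>R xh"
    define I where "I = labelsX B xh"
    have xP: "x \<in> Ppoly B" and lx: "labelsP B x = I" using sc by (simp_all add: x_def I_def)
    have li: "lin_indep_family (gP B) I" using LIP[OF poly nd xP] lx by simp
    let ?H = "{y. \<forall>l\<in>I. inner (gP B l) y = hP l}"
    have xH: "\<forall>l\<in>I. inner (gP B l) x = hP l" using lx by (auto simp: labelsP_def Pbind_iff)
    have "bP B" using P1[OF poly] nd by simp
    then have "card (labelsP B x) \<le> CARD('m)" using xP unfolding bP_def by blast
    then have cardI: "card I \<le> CARD('m)" using lx by simp
    have affH: "aff_dim ?H = int (CARD('m) - card I)"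
      using AFFH[OF _ li xH] by simp
    define U where "U = \<Inter> ((\<lambda>l. {y. inner (gP B l) y < hP l}) ` (- I))"
    have oU: "open U" unfolding U_def by (intro open_INT) (auto simp: open_halfspace_lt)
    have xU: "x \<in> U"
    proof -
      have "inner (gP B l) x < hP l" if "l \<notin> I" for l
      proof -
        have "inner (gP B l) x \<le> hP l" using xP by (simp add: Ppoly_eq polyh_def)
        moreover have "inner (gP B l) x \<noteq> hP l" using that lx by (auto simp: labelsP_def Pbind_iff)
        ultimately show ?thesis by simp
      qed
      then show ?thesis by (auto simp: U_def)
    qed
    have sub: "?H \<inter> U \<subseteq> PI B I"
    proof
      fix y assume y: "y \<in> ?H \<inter> U"
      have "inner (gP B l) y \<le> hP l" for l
      proof (cases "l \<in> I")
        case True then show ?thesis using y by auto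
      next
        case False then show ?thesis using y by (auto simp: U_def intro: less_imp_le)
      qed
      then show "y \<in> PI B I" using y by (simp add: PI_eq Ppoly_eq polyh_def)
    qed
    have "aff_dim (?H \<inter> U) = aff_dim ?H"
      by (rule aff_dim_convex_Int_open) (use affine_H[of I "gP B" hP] affine_imp_convex oU xU xH in auto)
    moreover have "aff_dim (?H \<inter> U) \<le> aff_dim (PI B I)" using sub by (rule aff_dim_subset)
    moreover have "aff_dim (PI B I) \<le> aff_dim ?H" by (rule aff_dim_subset) (auto simp: PI_eq)
    ultimately have "aff_dim (PI B I) = int (CARD('m) - card I)" using affH by linarith
    then show "aff_dim (PI B (labelsX B xh)) = int CARD('m) - int (card (labelsX B xh))"
      using cardI by (simp add: I_def of_nat_diff)
  qed
next
  assume a: "\<forall>xh\<in>mixed. aff_dim (PI B (labelsX B xh)) = int CARD('m) - int (card (labelsX B xh))"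
  show "ndP B" unfolding ndP_def
  proof (rule ballI, rule ccontr)
    fix xh :: "real^'m" assume xh: "xh \<in> mixed" and c: "\<not> card (bestresp2 B xh) \<le> card (supp xh)"
    note sc = scale_to_P[OF poly xh]
    have "card (labelsX B xh) = card {i. xh $ i = 0} + card (bestresp2 B xh)"
      unfolding labelsX_def by (rule card_split)
    moreover have "card {i. xh $ i = 0} + card (supp xh) = CARD('m)"
      using mixed_nonneg[OF xh] by (intro card_zero_supp) auto
    ultimately have gt: "card (labelsX B xh) > CARD('m)" using c by linarith
    have "(1 / Max (range (\<lambda>k. (transpose B *v xh) $ k))) *\<^sub>R xh \<in> PI B (labelsX B xh)"
      using sc by (simp add: PI_def)
    then have "PI B (labelsX B xh) \<noteq> {}" by blast
    then have "aff_dim (PI B (labelsX B xh)) \<noteq> -1" using aff_dim_empty by blast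
    then have "aff_dim (PI B (labelsX B xh)) \<ge> 0"
      using aff_dim_geq[of "PI B (labelsX B xh)"] by linarith
    moreover have "aff_dim (PI B (labelsX B xh)) = int CARD('m) - int (card (labelsX B xh))"
      using a xh by blast
    ultimately show False using gt by linarith
  qed
qed



lemma strict_interior:
  fixes g :: "'l::finite \<Rightarrow> 'a::euclidean_space"
  assumes "\<forall>l\<in>Ls. inner (g l) p < h l"
  shows "p \<in> interior (polyh Ls g h)"
proof -
  define U where "U = \<Inter> ((\<lambda>l. {y. inner (g l) y < h l}) ` Ls)"
  have "open U" unfolding U_def by (intro open_INT) (auto simp: open_halfspace_lt)
  moreover have "p \<in> U" using assms by (auto simp: U_def)
  moreover have "U \<subseteq> polyh Ls g h" by (auto simp: U_def polyh_def intro: less_imp_le)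
  ultimately show ?thesis by (meson interior_maximal subsetD)
qed

lemma polyh_convex: "convex (polyh Ls g h)"
proof -
  have e: "polyh Ls g h = \<Inter> ((\<lambda>l. {y. inner (g l) y \<le> h l}) ` Ls)" by (auto simp: polyh_def)
  show ?thesis unfolding e by (rule convex_Inter) (auto simp: convex_halfspace_le)
qed

lemma facet_in_hyperplane:
  fixes g :: "'l::finite \<Rightarrow> 'a::euclidean_space"
  assumes F: "F facet_of (polyh UNIV g h)"
  shows "\<exists>l. F \<subseteq> {x. inner (g l) x = h l}"
proof (rule ccontr)
  let ?P = "polyh UNIV g h"
  assume "\<not> ?thesis"
  then have "\<forall>l. \<exists>u\<in>F. inner (g l) u \<noteq> h l" by blast
  then obtain u where u: "\<And>l. u l \<in> F" "\<And>l. inner (g l) (u l) \<noteq> h l" by metis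
  have Ff: "F face_of ?P" "F \<noteq> ?P" using F unfolding facet_of_def by auto
  have FP: "F \<subseteq> ?P" using Ff(1) face_of_imp_subset by blast
  have ul: "inner (g l) (u l') \<le> h l" for l l' using FP u(1)[of l'] by (auto simp: polyh_def)
  define c where "c = real CARD('l)"
  have c0: "c > 0" by (simp add: c_def)
  define p where "p = (\<Sum>l\<in>UNIV. (1 / c) *\<^sub>R u l)"
  have "p \<in> F" unfolding p_def
    by (rule convex_sum) (use c0 u(1) face_of_imp_convex[OF Ff(1)] in \<open>auto simp: c_def\<close>)
  moreover have "inner (g l) p < h l" for l
  proof -
    have "inner (g l) p = (\<Sum>l'\<in>UNIV. inner (g l) (u l') / c)"
      by (simp add: p_def inner_sum_right)
    also have "\<dots> < (\<Sum>l'\<in>(UNIV::'l set). h l / c)"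
    proof -
      have A: "\<forall>x\<in>UNIV. inner (g l) (u x) / c \<le> h l / c" using ul c0 by (simp add: divide_right_mono)
      have "inner (g l) (u l) < h l" using ul[of l l] u(2)[of l] by simp
      then have B: "\<exists>a\<in>UNIV. inner (g l) (u a) / c < h l / c" using c0 by (intro bexI[of _ l]) (simp_all add: divide_strict_right_mono)
      show ?thesis using sum_strict_mono_ex1[OF finite_class.finite_UNIV A B] by simp
    qed
    also have "\<dots> = h l" using c0 by (simp add: c_def)
    finally show ?thesis .
  qed
  then have "p \<in> interior ?P" by (intro strict_interior) auto
  then have "p \<in> rel_interior ?P" using interior_subset_rel_interior by blast
  ultimately show False using face_of_disjoint_rel_interior[OF Ff] by blast
qed

lemma facets_same_hyperplane:
  fixes g :: "'l::finite \<Rightarrow> 'a::euclidean_space"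
  assumes F1: "F1 facet_of (polyh UNIV g h)" and F2: "F2 facet_of (polyh UNIV g h)"
    and s1: "F1 \<subseteq> {x. inner (g l) x = h l}" and s2: "F2 \<subseteq> {x. inner (g l) x = h l}"
    and pp: "pp \<in> polyh UNIV g h" "inner (g l) pp \<noteq> h l"
  shows "F1 = F2"
proof -
  let ?P = "polyh UNIV g h"
  let ?G = "?P \<inter> {x. inner (g l) x = h l}"
  have G: "?G face_of ?P" by (rule face_of_Int_supporting_hyperplane_le[OF polyh_convex]) (auto simp: polyh_def)
  have GP: "?G \<noteq> ?P" using pp by auto
  have "F = ?G" if F: "F facet_of ?P" and s: "F \<subseteq> {x. inner (g l) x = h l}" for F
  proof (rule ccontr)
    assume ne: "F \<noteq> ?G"
    have Ff: "F face_of ?P" using F facet_of_def by blast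
    have "F \<subseteq> ?G" using s face_of_imp_subset[OF Ff] by blast
    then have "F face_of ?G" using face_of_subset[OF Ff] by blast
    then have "aff_dim F < aff_dim ?G" using face_of_aff_dim_lt[OF face_of_imp_convex[OF G]] ne by blast
    moreover have "aff_dim ?G < aff_dim ?P" using face_of_aff_dim_lt[OF polyh_convex G GP] .
    moreover have "aff_dim F = aff_dim ?P - 1" using F facet_of_def by blast
    ultimately show False by linarith
  qed
  then show ?thesis using F1 F2 s1 s2 by blast
qed

lemma nonredundant_facet:
  fixes g :: "'l::finite \<Rightarrow> 'a::euclidean_space"
  assumes p0: "\<forall>l. inner (g l) p0 < h l"
    and y: "\<forall>l'. l' \<noteq> l \<longrightarrow> inner (g l') y \<le> h l'" "inner (g l) y > h l"
  shows "(polyh UNIV g h \<inter> {x. inner (g l) x = h l}) facet_of (polyh UNIV g h)"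
    "\<exists>q\<in>polyh UNIV g h. bnd UNIV g h q = {l}"
proof -
  let ?P = "polyh UNIV g h"
  let ?G = "?P \<inter> {x. inner (g l) x = h l}"
  define s where "s = (h l - inner (g l) p0) / (inner (g l) y - inner (g l) p0)"
  have d: "inner (g l) y - inner (g l) p0 > 0" using p0 y(2) by (smt (verit))
  have s0: "s > 0" "s < 1" using p0[rule_format, of l] y(2) d by (simp_all add: s_def divide_pos_pos divide_less_eq)
  define q where "q = p0 + s *\<^sub>R (y - p0)"
  have q1: "inner (g l) q = inner (g l) p0 + s * (inner (g l) y - inner (g l) p0)"
    by (simp add: q_def inner_add_right inner_diff_right)
  have q2: "s * (inner (g l) y - inner (g l) p0) = h l - inner (g l) p0"
    using d by (simp add: s_def)
  have ql: "inner (g l) q = h l" using q1 q2 by linarith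
  have qo: "inner (g l') q < h l'" if "l' \<noteq> l" for l'
  proof -
    have "inner (g l') q = (1 - s) * inner (g l') p0 + s * inner (g l') y"
      by (simp add: q_def inner_add_right inner_diff_right algebra_simps)
    also have "\<dots> < (1 - s) * h l' + s * h l'"
    proof -
      have "(1 - s) * inner (g l') p0 < (1 - s) * h l'" using s0 p0 by simp
      moreover have "s * inner (g l') y \<le> s * h l'" using s0 y(1) that by (simp add: mult_left_mono)
      ultimately show ?thesis by linarith
    qed
    finally show ?thesis by (simp add: algebra_simps)
  qed
  have "inner (g l') q \<le> h l'" for l' using ql qo[of l'] by (cases "l' = l") auto
  then have qP: "q \<in> ?P" by (auto simp: polyh_def)
  have "bnd UNIV g h q = {l}"
  proof (rule set_eqI)
    fix l' show "l' \<in> bnd UNIV g h q \<longleftrightarrow> l' \<in> {l}"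
      using ql qo[of l'] by (cases "l' = l") (auto simp: bnd_def)
  qed
  then show "\<exists>q\<in>?P. bnd UNIV g h q = {l}" using qP by blast
  have G: "?G face_of ?P" by (rule face_of_Int_supporting_hyperplane_le[OF polyh_convex]) (auto simp: polyh_def)
  have p0P: "p0 \<in> ?P" using p0 by (auto simp: polyh_def less_imp_le)
  have "p0 \<notin> ?G" using p0[rule_format, of l] by auto
  then have GP: "?G \<noteq> ?P" using p0P by blast
  have int: "interior ?P \<noteq> {}" using strict_interior[of UNIV g p0 h] p0 by auto
  have affP: "aff_dim ?P = int DIM('a)" by (rule aff_dim_nonempty_interior[OF int])
  have gl: "g l \<noteq> 0" using p0[rule_format, of l] ql by auto
  define U where "U = \<Inter> ((\<lambda>l'. {x. inner (g l') x < h l'}) ` (- {l}))"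
  have oU: "open U" unfolding U_def by (intro open_INT) (auto simp: open_halfspace_lt)
  have qU: "q \<in> U" using qo by (auto simp: U_def)
  have "{x. inner (g l) x = h l} \<inter> U \<subseteq> ?G"
    by (auto simp: U_def polyh_def intro: less_imp_le)
  then have "aff_dim ({x. inner (g l) x = h l} \<inter> U) \<le> aff_dim ?G" by (rule aff_dim_subset)
  moreover have "aff_dim ({x. inner (g l) x = h l} \<inter> U) = aff_dim {x. inner (g l) x = h l}"
    by (rule aff_dim_convex_Int_open) (use oU qU ql convex_hyperplane in auto)
  moreover have "aff_dim {x. inner (g l) x = h l} = int (DIM('a) - 1)" by (rule aff_dim_hyperplane[OF gl])
  moreover have "aff_dim ?G < aff_dim ?P" using face_of_aff_dim_lt[OF polyh_convex G GP] .
  moreover have "DIM('a) \<ge> 1" by (simp add: DIM_positive Suc_leI)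
  ultimately have "aff_dim ?G = aff_dim ?P - 1" using affP by linarith
  moreover have "?G \<noteq> {}" using qP ql by blast
  ultimately show "?G facet_of ?P" using G by (simp add: facet_of_def)
qed

lemma redundant_binding:
  fixes g :: "'l::finite \<Rightarrow> 'a::euclidean_space"
  assumes bd: "bounded (polyh UNIV g h)"
    and red: "polyh (- {l}) g h = polyh UNIV g h"
    and x: "x \<in> polyh UNIV g h" "l \<in> bnd UNIV g h x"
  shows "\<exists>x'\<in>polyh UNIV g h. card (bnd UNIV g h x') > DIM('a)"
proof -
  obtain x' where x': "x' \<in> polyh UNIV g h" "bnd UNIV g h x \<subseteq> bnd UNIV g h x'"
    "span (g ` bnd UNIV g h x') = UNIV" using V2[OF _ bd x(1)] by auto
  let ?K = "bnd UNIV g h x' - {l}"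
  have lK: "l \<in> bnd UNIV g h x'" using x(2) x'(2) by blast
  have "dim (g ` ?K) = DIM('a)"
  proof (rule ccontr)
    assume "dim (g ` ?K) \<noteq> DIM('a)"
    then have "dim (g ` ?K) < DIM('a)" using dim_subset_UNIV le_neq_implies_less by blast
    then obtain w where w0: "w \<noteq> 0" and wo: "\<And>y. y \<in> span (g ` ?K) \<Longrightarrow> orthogonal w y"
      using orthogonal_to_subspace_exists by blast
    have wK: "inner (g l') w = 0" if "l' \<in> ?K" for l'
      using wo[of "g l'"] that span_base[of "g l'"] by (simp add: orthogonal_def inner_commute)
    have x'r: "x' \<in> polyh (- {l}) g h" using x'(1) by (simp add: polyh_def)
    have "bnd (- {l}) g h x' = ?K" by (auto simp: bnd_def)
    then obtain e where e: "e > 0" "\<And>t. \<bar>t\<bar> \<le> e \<Longrightarrow> x' + t *\<^sub>R w \<in> polyh (- {l}) g h"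
      using V1[OF _ x'r, of w] wK by auto
    have "x' + e *\<^sub>R w \<in> polyh UNIV g h" "x' + (- e) *\<^sub>R w \<in> polyh UNIV g h"
      using e(2)[of e] e(2)[of "-e"] e(1) red by auto
    then have "inner (g l) (x' + e *\<^sub>R w) \<le> h l" "inner (g l) (x' + (-e) *\<^sub>R w) \<le> h l"
      by (auto simp: polyh_def)
    moreover have "inner (g l) x' = h l" using lK by (simp add: bnd_def)
    moreover have "inner (g l) (x' + e *\<^sub>R w) = inner (g l) x' + e * inner (g l) w"
      "inner (g l) (x' + (-e) *\<^sub>R w) = inner (g l) x' - e * inner (g l) w"
      by (simp_all add: inner_add_right inner_diff_right)
    ultimately have "e * inner (g l) w = 0" by linarith
    then have wl: "inner (g l) w = 0" using e(1) by simp
    have "inner (g l') w = 0" if "l' \<in> bnd UNIV g h x'" for l'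
      using wK wl that by (cases "l' = l") auto
    then have oy: "\<And>y. y \<in> g ` bnd UNIV g h x' \<Longrightarrow> orthogonal w y"
      by (auto simp: orthogonal_def inner_commute)
    have "orthogonal v w" if "v \<in> span (g ` bnd UNIV g h x')" for v
      using orthogonal_to_span[OF that oy] by (simp add: orthogonal_commute)
    then have "orthogonal w w" using x'(3) by auto
    then show False using w0 by (simp add: orthogonal_def)
  qed
  moreover have "dim (g ` ?K) \<le> card ?K"
    by (rule order_trans[OF dim_le_card' card_image_le]) auto
  moreover have "card (bnd UNIV g h x') = Suc (card ?K)"
    using lK by (intro card_Suc_Diff1[symmetric]) auto
  ultimately have "card (bnd UNIV g h x') > DIM('a)" by linarith
  then show ?thesis using x'(1) by blast
qed



lemma strictP: "\<exists>p0. \<forall>l. inner (gP (B::real^'n^'m) l) p0 < hP l"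
proof -
  define S where "S = (\<Sum>j\<in>UNIV. \<Sum>i\<in>UNIV. \<bar>B $ i $ j\<bar>)"
  have S0: "S \<ge> 0" unfolding S_def by (intro sum_nonneg) auto
  define t where "t = 1 / (1 + S)"
  have t0: "t > 0" using S0 by (simp add: t_def)
  have tS: "t * S < 1" using S0 by (simp add: t_def)
  define p0 :: "real^'m" where "p0 = (\<chi> i. t)"
  have "inner (gP B l) p0 < hP l" for l
  proof (cases l)
    case (Inl i) then show ?thesis using t0 by (simp add: inner_gP hP_def p0_def)
  next
    case (Inr j)
    have "(transpose B *v p0) $ j = t * (\<Sum>i\<in>UNIV. B $ i $ j)"
      by (simp add: p0_def matrix_vector_mult_def transpose_def sum_distrib_left mult.commute)
    also have "\<dots> \<le> t * (\<Sum>i\<in>UNIV. \<bar>B $ i $ j\<bar>)"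
      using t0 by (intro mult_left_mono sum_mono) auto
    also have "\<dots> \<le> t * S"
      unfolding S_def using t0
      by (intro mult_left_mono member_le_sum[of j UNIV "\<lambda>j. \<Sum>i\<in>UNIV. \<bar>B $ i $ j\<bar>"]) (auto intro: sum_nonneg)
    finally show ?thesis using tS Inr by (simp add: inner_gP hP_def)
  qed
  then show ?thesis by blast
qed

lemma P_redundant_iff: "P_redundant B l \<longleftrightarrow> polyh (- {l}) (gP B) hP = polyh UNIV (gP B) hP"
proof -
  have "{x. \<forall>l'. l' \<noteq> l \<longrightarrow> Pineq B l' x} = polyh (- {l}) (gP B) hP"
    by (auto simp: polyh_def Pineq_iff simp del: inner_gP)
  then show ?thesis by (simp add: P_redundant_def Ppoly_eq)
qed

lemma P4:
  fixes B :: "real^'n^'m"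
  assumes poly: "polytope (Ppoly B)"
  shows "ndP B \<longleftrightarrow> (simple_polytope (Ppoly B) \<and>
        (\<forall>l. P_redundant B l \<longrightarrow> (\<forall>x\<in>Ppoly B. \<not> Pbind B l x)))"
proof -
  let ?g = "gP B" and ?h = "hP :: 'm + 'n \<Rightarrow> real"
  let ?P = "polyh UNIV ?g ?h"
  obtain p0 where p0: "\<forall>l. inner (?g l) p0 < ?h l" using strictP by blast
  have p0P: "p0 \<in> ?P" using p0 by (auto simp: polyh_def less_imp_le)
  have affP: "aff_dim ?P = int CARD('m)"
    using aff_dim_nonempty_interior[of ?P] strict_interior[of UNIV ?g p0 ?h] p0 by auto
  have polyP: "polytope ?P" using poly by (simp add: Ppoly_eq)
  have finF: "finite {F. F facet_of ?P \<and> x \<in> F}" for x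
    by (rule finite_subset[OF _ finite_polytope_faces[OF polyP]]) (auto simp: facet_of_def)
  show ?thesis
  proof
    assume nd: "ndP B"
    have bP: "bP B" using P1[OF poly] nd by simp
    have simple: "simple_polytope (Ppoly B)"
      unfolding simple_polytope_def Ppoly_eq
    proof (intro conjI ballI)
      show "polytope ?P" by (rule polyP)
      fix x assume x: "x \<in> ?P"
      define \<phi> where "\<phi> = (\<lambda>F. SOME l. F \<subseteq> {y. inner (?g l) y = ?h l})"
      have phi: "F \<subseteq> {y. inner (?g (\<phi> F)) y = ?h (\<phi> F)}" if "F facet_of ?P" for F
        using facet_in_hyperplane[OF that] unfolding \<phi>_def by (rule someI_ex)
      have "card {F. F facet_of ?P \<and> x \<in> F} \<le> card (bnd UNIV ?g ?h x)"
      proof (rule card_inj_on_le[of \<phi>])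
        show "inj_on \<phi> {F. F facet_of ?P \<and> x \<in> F}"
        proof (rule inj_onI)
          fix F1 F2 assume F1: "F1 \<in> {F. F facet_of ?P \<and> x \<in> F}" and F2: "F2 \<in> {F. F facet_of ?P \<and> x \<in> F}"
            and e: "\<phi> F1 = \<phi> F2"
          have f1: "F1 facet_of ?P" and f2: "F2 facet_of ?P" using F1 F2 by auto
          have s1: "F1 \<subseteq> {y. inner (?g (\<phi> F1)) y = ?h (\<phi> F1)}" using phi[OF f1] .
          have s2: "F2 \<subseteq> {y. inner (?g (\<phi> F1)) y = ?h (\<phi> F1)}" using phi[OF f2] e by simp
          have pn: "inner (?g (\<phi> F1)) p0 \<noteq> ?h (\<phi> F1)" using p0 by (metis less_irrefl)
          show "F1 = F2" by (rule facets_same_hyperplane[OF f1 f2 s1 s2 p0P pn])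
        qed
        show "\<phi> ` {F. F facet_of ?P \<and> x \<in> F} \<subseteq> bnd UNIV ?g ?h x"
          using phi by (auto simp: bnd_def simp del: inner_gP)
      qed simp
      also have "card (bnd UNIV ?g ?h x) \<le> CARD('m)"
        using bP x unfolding bP_def by (simp add: Ppoly_eq labelsP_eq)
      finally show "int (card {F. F facet_of ?P \<and> x \<in> F}) \<le> aff_dim ?P" using affP by simp
    qed
    have red: "\<forall>l. P_redundant B l \<longrightarrow> (\<forall>x\<in>Ppoly B. \<not> Pbind B l x)"
    proof (intro allI impI ballI notI)
      fix l x assume r: "P_redundant B l" and x: "x \<in> Ppoly B" and b: "Pbind B l x"
      have "\<exists>x'\<in>?P. card (bnd UNIV ?g ?h x') > DIM(real^'m)"
        by (rule redundant_binding[OF bounded_Ppoly[OF poly]])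
           (use r x b in \<open>simp_all add: P_redundant_iff Ppoly_eq bnd_def Pbind_iff del: inner_gP\<close>)
      then show False using bP unfolding bP_def by (auto simp: Ppoly_eq labelsP_eq)
    qed
    show "simple_polytope (Ppoly B) \<and> (\<forall>l. P_redundant B l \<longrightarrow> (\<forall>x\<in>Ppoly B. \<not> Pbind B l x))"
      using simple red by blast
  next
    assume h: "simple_polytope (Ppoly B) \<and> (\<forall>l. P_redundant B l \<longrightarrow> (\<forall>x\<in>Ppoly B. \<not> Pbind B l x))"
    have "bP B" unfolding bP_def
    proof
      fix x assume xP: "x \<in> Ppoly B"
      let ?L = "labelsP B x"
      have nr: "\<exists>y. (\<forall>l'. l' \<noteq> l \<longrightarrow> inner (?g l') y \<le> ?h l') \<and> inner (?g l) y > ?h l" if l: "l \<in> ?L" for l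
      proof -
        have "\<not> P_redundant B l" using h xP l by (auto simp: labelsP_def)
        then have "polyh (- {l}) ?g ?h \<noteq> ?P" by (simp add: P_redundant_iff)
        moreover have "?P \<subseteq> polyh (- {l}) ?g ?h" by (auto simp: polyh_def)
        ultimately obtain y where y: "y \<in> polyh (- {l}) ?g ?h" "y \<notin> ?P" by blast
        then obtain l'' where "inner (?g l'') y > ?h l''" by (auto simp: polyh_def not_le simp del: inner_gP)
        moreover have "l'' = l"
        proof (rule ccontr)
          assume "l'' \<noteq> l"
          then have "inner (?g l'') y \<le> ?h l''" using y(1) by (simp add: polyh_def del: inner_gP)
          then show False using calculation by simp
        qed
        ultimately show ?thesis using y(1) by (auto simp: polyh_def simp del: inner_gP)
      qed
      define F where "F = (\<lambda>l. ?P \<inter> {y. inner (?g l) y = ?h l})"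
      have Ff: "F l facet_of ?P" "\<exists>q\<in>?P. bnd UNIV ?g ?h q = {l}" if "l \<in> ?L" for l
        using nonredundant_facet[OF p0] nr[OF that] unfolding F_def by blast+
      have "card ?L \<le> card {F. F facet_of ?P \<and> x \<in> F}"
      proof (rule card_inj_on_le[of F])
        show "inj_on F ?L"
        proof (rule inj_onI)
          fix l1 l2 assume l1: "l1 \<in> ?L" and l2: "l2 \<in> ?L" and e: "F l1 = F l2"
          obtain q where q: "q \<in> ?P" "bnd UNIV ?g ?h q = {l1}" using Ff(2)[OF l1] by blast
          have "q \<in> F l1" using q by (auto simp: F_def bnd_def simp del: inner_gP)
          then have "q \<in> F l2" using e by simp
          then have "l2 \<in> bnd UNIV ?g ?h q" by (simp add: F_def bnd_def del: inner_gP)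
          then show "l1 = l2" using q by simp
        qed
        show "F ` ?L \<subseteq> {F. F facet_of ?P \<and> x \<in> F}"
          using Ff(1) xP by (auto simp: F_def labelsP_def Pbind_iff Ppoly_eq simp del: inner_gP)
      qed (rule finF)
      also have "int (card {F. F facet_of ?P \<and> x \<in> F}) \<le> aff_dim ?P"
        using h xP unfolding simple_polytope_def Ppoly_eq by blast
      finally show "card ?L \<le> CARD('m)" using affP by simp
    qed
    then show "ndP B" using P1[OF poly] by simp
  qed
qed



lemma bil: "inner x (B *v y) = inner y (transpose B *v (x::real^'m))"
  unfolding inner_vec_def matrix_vector_mult_def transpose_def
  by (simp add: sum_distrib_left mult_ac) (rule sum.swap)

lemma Bcol: "B *v axis j 1 = column j B"
  by (simp add: vec_eq_iff matrix_vector_mult_def column_def axis_def if_distrib sum.delta cong: if_cong)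

lemma axis_mixed: "axis j 1 \<in> (mixed :: (real^'n) set)"
  by (simp add: mixed_def axis_def sum.delta)

lemma convex_mixed: "convex (mixed :: (real^'n) set)"
  unfolding convex_def mixed_def
  by (auto simp: sum.distrib sum_distrib_left[symmetric] add_nonneg_nonneg mult_nonneg_nonneg)

lemma compact_mixed: "compact (mixed :: (real^'n) set)"
proof -
  have c: "closed (mixed :: (real^'n) set)"
  proof -
    have e: "(mixed :: (real^'n) set) = (\<Inter>i. {x. 0 \<le> x $ i}) \<inter> {x. (\<Sum>i\<in>UNIV. x $ i) = 1}"
      by (auto simp: mixed_def)
    show ?thesis unfolding e
      by (intro closed_Int closed_INT ballI closed_Collect_le closed_Collect_eq continuous_intros)
  qed
  have "bounded (mixed :: (real^'n) set)"
  proof -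
    have "norm x \<le> 1" if "x \<in> mixed" for x :: "real^'n"
    proof -
      have "norm x \<le> (\<Sum>i\<in>UNIV. \<bar>x $ i\<bar>)" by (rule norm_le_l1_cart)
      also have "\<dots> = (\<Sum>i\<in>UNIV. x $ i)" using that by (simp add: mixed_def)
      also have "\<dots> = 1" using that by (simp add: mixed_def)
      finally show ?thesis .
    qed
    then show ?thesis unfolding bounded_iff by blast
  qed
  then show ?thesis using c by (simp add: compact_eq_bounded_closed)
qed

lemma S1:
  fixes B :: "real^'n^'m"
  assumes y: "y \<in> mixed" "y \<noteq> axis j 1" and dom: "\<forall>i. B $ i $ j \<le> (B *v y) $ i"
  shows "P_redundant B (Inr j)"
proof -
  have yj: "y $ j < 1"
  proof (rule ccontr)
    assume "\<not> y $ j < 1"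
    moreover have "y $ j \<le> 1"
      using y(1) member_le_sum[of j UNIV "\<lambda>i. y $ i"] by (simp add: mixed_def)
    ultimately have yj1: "y $ j = 1" by simp
    have "(\<Sum>k\<in>UNIV - {j}. y $ k) = 0"
      using y(1) yj1 sum.remove[of UNIV j "\<lambda>k. y $ k"] by (simp add: mixed_def)
    then have "\<forall>k\<in>UNIV - {j}. y $ k = 0"
      using y(1) by (subst (asm) sum_nonneg_eq_0_iff) (auto simp: mixed_def)
    then have "y = axis j 1" using yj1 by (auto simp: vec_eq_iff axis_def)
    then show False using y(2) by simp
  qed
  have "{x. \<forall>l'. l' \<noteq> Inr j \<longrightarrow> Pineq B l' x} \<subseteq> Ppoly B"
  proof
    fix x assume "x \<in> {x. \<forall>l'. l' \<noteq> Inr j \<longrightarrow> Pineq B l' x}"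
    then have x0: "\<forall>i. 0 \<le> x $ i" and xk: "\<And>k. k \<noteq> j \<Longrightarrow> (transpose B *v x) $ k \<le> 1"
      by (auto simp: Pineq_def dest: spec[of _ "Inl _"] spec[of _ "Inr _"])
    have "(transpose B *v x) $ j = inner x (column j B)" by (metis inner_column inner_commute)
    also have "\<dots> \<le> inner x (B *v y)"
      unfolding inner_vec_def using x0 dom by (intro sum_mono) (auto simp: column_def intro!: mult_left_mono)
    also have "\<dots> = (\<Sum>k\<in>UNIV. y $ k * (transpose B *v x) $ k)" by (use bil[of x B y] in \<open>simp add: inner_vec_def\<close>)
    also have "\<dots> = y $ j * (transpose B *v x) $ j + (\<Sum>k\<in>UNIV - {j}. y $ k * (transpose B *v x) $ k)"
      by (simp add: sum.remove)
    also have "(\<Sum>k\<in>UNIV - {j}. y $ k * (transpose B *v x) $ k) \<le> (\<Sum>k\<in>UNIV - {j}. y $ k)"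
      using xk y(1) by (intro sum_mono) (auto simp: mixed_def intro: mult_left_le)
    also have "(\<Sum>k\<in>UNIV - {j}. y $ k) = 1 - y $ j"
      using y(1) sum.remove[of UNIV j "\<lambda>k. y $ k"] by (simp add: mixed_def)
    finally have "(1 - y $ j) * (transpose B *v x) $ j \<le> (1 - y $ j)" by (simp add: algebra_simps)
    then have xj: "(transpose B *v x) $ j \<le> 1" using yj by simp
    have "\<forall>k. (transpose B *v x) $ k \<le> 1"
    proof
      fix k show "(transpose B *v x) $ k \<le> 1" using xj xk[of k] by (cases "k = j") auto
    qed
    then show "x \<in> Ppoly B" using x0 by (auto simp: in_Ppoly)
  qed
  moreover have "Ppoly B \<subseteq> {x. \<forall>l'. l' \<noteq> Inr j \<longrightarrow> Pineq B l' x}" by (auto simp: Ppoly_def)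
  ultimately show ?thesis unfolding P_redundant_def by blast
qed

lemma S2:
  fixes B :: "real^'n^'m"
  assumes y: "y \<in> mixed" and dom: "\<forall>i. B $ i $ j < (B *v y) $ i" and x: "x \<in> Ppoly B"
  shows "\<not> Pbind B (Inr j) x"
proof
  assume b: "Pbind B (Inr j) x"
  then have xj: "(transpose B *v x) $ j = 1" by (simp add: Pbind_def)
  have x0: "\<forall>i. 0 \<le> x $ i" and x1: "\<And>k. (transpose B *v x) $ k \<le> 1" using x by (auto simp: in_Ppoly)
  have xn: "x \<noteq> 0" using xj by auto
  obtain i0 where i0: "x $ i0 \<noteq> 0" using xn by (metis vec_eq_iff zero_index)
  then have i0p: "x $ i0 > 0" using x0 by (metis less_eq_real_def)
  have "(transpose B *v x) $ j = inner x (column j B)" by (metis inner_column inner_commute)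
  also have "\<dots> < inner x (B *v y)"
  proof -
    have A: "\<forall>i\<in>UNIV. x $ i * column j B $ i \<le> x $ i * (B *v y) $ i"
    proof
      fix i show "x $ i * column j B $ i \<le> x $ i * (B *v y) $ i"
        using x0[rule_format, of i] dom[rule_format, of i] by (simp add: column_def mult_left_mono)
    qed
    have B: "\<exists>i\<in>UNIV. x $ i * column j B $ i < x $ i * (B *v y) $ i"
      using i0p dom[rule_format, of i0] by (intro bexI[of _ i0]) (simp_all add: column_def)
    have "(\<Sum>i\<in>UNIV. x $ i * column j B $ i) < (\<Sum>i\<in>UNIV. x $ i * (B *v y) $ i)"
      using sum_strict_mono_ex1[OF finite_class.finite_UNIV A B] by simp
    then show ?thesis by (simp add: inner_vec_def)
  qed
  also have "\<dots> = (\<Sum>k\<in>UNIV. y $ k * (transpose B *v x) $ k)" by (use bil[of x B y] in \<open>simp add: inner_vec_def\<close>)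
  also have "\<dots> \<le> (\<Sum>k\<in>UNIV. y $ k)"
    using x1 y by (intro sum_mono) (auto simp: mixed_def intro: mult_left_le)
  also have "\<dots> = 1" using y by (simp add: mixed_def)
  finally show False using xj by simp
qed

lemma S5:
  fixes B :: "real^'n^'m"
  shows "\<not> P_redundant B (Inl i)"
proof
  assume r: "P_redundant B (Inl i)"
  define e where "e = 1 / (1 + (\<Sum>k\<in>UNIV. \<bar>B $ i $ k\<bar>))"
  have S0: "(\<Sum>k\<in>UNIV. \<bar>B $ i $ k\<bar>) \<ge> 0" by (intro sum_nonneg) auto
  have "1 + (\<Sum>k\<in>UNIV. \<bar>B $ i $ k\<bar>) > 0" using S0 by linarith
  then have e0: "e > 0" by (simp add: e_def)
  define y :: "real^'m" where "y = - e *\<^sub>R axis i 1"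
  have yk: "(transpose B *v y) $ k \<le> 1" for k
  proof -
    have "(transpose B *v y) $ k = - e * B $ i $ k"
      by (simp add: y_def matrix_vector_mult_def transpose_def axis_def if_distrib sum.delta cong: if_cong)
    also have "\<dots> = e * (- B $ i $ k)" by simp
    also have "\<dots> \<le> e * \<bar>B $ i $ k\<bar>" using e0 by (intro mult_left_mono) auto
    also have "\<dots> \<le> e * (\<Sum>k\<in>UNIV. \<bar>B $ i $ k\<bar>)"
      using e0 by (intro mult_left_mono member_le_sum) auto
    also have "\<dots> \<le> 1"
    proof -
      have p: "1 + (\<Sum>k\<in>UNIV. \<bar>B $ i $ k\<bar>) > 0" using S0 by linarith
      show ?thesis unfolding e_def using p by (simp add: pos_divide_le_eq)
    qed
    finally show ?thesis .
  qed
  have "y \<in> {x. \<forall>l'. l' \<noteq> Inl i \<longrightarrow> Pineq B l' x}"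
  proof (clarify)
    fix l' :: "'m + 'n" assume "l' \<noteq> Inl i"
    then show "Pineq B l' y" using yk by (cases l') (auto simp: Pineq_def y_def axis_def)
  qed
  moreover have "y \<notin> Ppoly B" using e0 by (auto simp: in_Ppoly y_def axis_def dest: spec[of _ i])
  ultimately show False using r unfolding P_redundant_def by blast
qed



lemma D_props:
  fixes B :: "real^'n^'m"
  assumes "convex S" "compact S"
  shows "convex ((\<lambda>y. B *v y - c) ` S)" "compact ((\<lambda>y. B *v y - c) ` S)"
proof -
  have e: "(\<lambda>y. B *v y - c) ` S = (\<lambda>v. v - c) ` ((\<lambda>y. B *v y) ` S)" by (simp add: image_image)
  show "convex ((\<lambda>y. B *v y - c) ` S)" unfolding e
    by (rule convex_translation_subtract[OF convex_linear_image[OF matrix_vector_mul_linear assms(1)]])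
  have "continuous_on S (\<lambda>y. B *v y)"
    by (rule linear_continuous_on) (simp add: linear_conv_bounded_linear[symmetric])
  then show "compact ((\<lambda>y. B *v y - c) ` S)" unfolding e
    by (rule compact_translation_subtract[OF compact_continuous_image[OF _ assms(2)]])
qed

lemma inner_one_axis: "inner (a::real^'m) (t *\<^sub>R axis i 1 + (\<chi> k. 1)) = t * a $ i + inner a (\<chi> k. 1)"
  by (simp add: inner_add_right inner_axis)

lemma S3:
  fixes B :: "real^'n^'m"
  assumes nsd: "\<not> (\<exists>y'\<in>mixed. \<forall>i. B $ i $ j < (B *v y') $ i)"
  shows "\<exists>xh\<in>mixed. j \<in> bestresp2 B xh"
proof -
  define D where "D = (\<lambda>y. B *v y - column j B) ` mixed"
  define T :: "(real^'m) set" where "T = \<Inter> ((\<lambda>i. {p. 0 < inner (axis i 1) p}) ` UNIV)"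
  have Tm: "p \<in> T \<longleftrightarrow> (\<forall>i. 0 < p $ i)" for p by (simp add: T_def inner_axis')
  define one :: "real^'m" where "one = (\<chi> k. 1)"
  have oneT: "one \<in> T" by (simp add: Tm one_def)
  have cD: "convex D" unfolding D_def by (rule D_props[OF convex_mixed compact_mixed])
  have cT: "convex T" unfolding T_def by (intro convex_Inter) (auto simp: convex_halfspace_gt)
  have D0: "0 \<in> D" unfolding D_def using axis_mixed[of j] by (auto simp: Bcol intro!: image_eqI[of _ _ "axis j 1"])
  have disj: "D \<inter> T = {}"
  proof (rule ccontr)
    assume "D \<inter> T \<noteq> {}"
    then obtain y where y: "y \<in> mixed" "B *v y - column j B \<in> T" unfolding D_def by blast
    then have "\<forall>i. B $ i $ j < (B *v y) $ i" by (simp add: Tm column_def)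
    then show False using nsd y(1) by blast
  qed
  obtain a b where a0: "a \<noteq> 0" and aD: "\<forall>d\<in>D. inner a d \<le> b" and aT: "\<forall>p\<in>T. b \<le> inner a p"
    using separating_hyperplane_sets[OF cD cT _ _ disj] D0 oneT by blast
  have b0: "0 \<le> b" using aD D0 by force
  have anneg: "\<forall>i. 0 \<le> a $ i"
  proof (rule ccontr)
    assume "\<not> ?thesis"
    then obtain i where ai: "a $ i < 0" by (auto simp: not_le)
    define t where "t = (\<bar>inner a one\<bar> + 1) / (- a $ i)"
    have t0: "t > 0" unfolding t_def using ai by (intro divide_pos_pos) auto
    have "t * a $ i = - (\<bar>inner a one\<bar> + 1)" using ai by (simp add: t_def)
    then have "inner a (t *\<^sub>R axis i 1 + one) < 0" unfolding one_def inner_one_axis by linarith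
    moreover have "t *\<^sub>R axis i 1 + one \<in> T" using t0 by (auto simp: Tm one_def axis_def)
    ultimately show False using aT b0 by fastforce
  qed
  have b00: "b \<le> 0"
  proof (rule ccontr)
    assume "\<not> b \<le> 0"
    then have bp: "b > 0" by simp
    define e where "e = b / (2 * (\<bar>inner a one\<bar> + 1))"
    have e0: "e > 0" using bp by (simp add: e_def divide_pos_pos)
    have "e *\<^sub>R one \<in> T" using e0 by (simp add: Tm one_def)
    then have "b \<le> e * inner a one" using aT by fastforce
    also have "\<dots> \<le> e * \<bar>inner a one\<bar>" using e0 by (intro mult_left_mono) auto
    also have "\<dots> < e * (2 * (\<bar>inner a one\<bar> + 1))" using e0 by (intro mult_strict_left_mono) auto
    also have "\<dots> = b" by (simp add: e_def)
    finally show False by simp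
  qed
  have colle: "inner a (column k B) \<le> inner a (column j B)" for k
  proof -
    have "column k B - column j B \<in> D" unfolding D_def using axis_mixed[of k]
      by (auto simp: Bcol intro!: image_eqI[of _ _ "axis k 1"])
    then have "inner a (column k B - column j B) \<le> 0" using aD b00 by fastforce
    then show ?thesis by (simp add: inner_diff_right)
  qed
  define s where "s = (\<Sum>i\<in>UNIV. a $ i)"
  have s0: "s > 0" unfolding s_def by (rule sum_pos_nonneg[OF anneg a0])
  define xh where "xh = (1 / s) *\<^sub>R a"
  have xh: "xh \<in> mixed" using normalize_mixed(1)[OF anneg a0] by (simp add: xh_def s_def)
  have bx: "(transpose B *v xh) $ k = inner a (column k B) / s" for k
    by (simp add: xh_def matrix_vector_mult_scaleR inner_column[symmetric] inner_commute)
  have "Max (range (\<lambda>k. (transpose B *v xh) $ k)) = (transpose B *v xh) $ j"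
  proof (rule Max_range_eq[of _ _ j])
    fix k show "(transpose B *v xh) $ k \<le> (transpose B *v xh) $ j"
      unfolding bx using colle[of k] s0 by (simp add: divide_right_mono)
  qed simp
  then have "j \<in> bestresp2 B xh" by (simp add: bestresp2_def)
  then show ?thesis using xh by blast
qed



lemma S4w:
  fixes B :: "real^'n^'m"
  assumes nwd: "\<not> (\<exists>y\<in>mixed. y $ j = 0 \<and> (\<forall>i. B $ i $ j \<le> (B *v y) $ i))"
  shows "\<exists>w. (\<forall>i. 0 \<le> w $ i) \<and> (\<forall>k. k \<noteq> j \<longrightarrow> (transpose B *v w) $ k < (transpose B *v w) $ j)"
proof (cases "\<exists>k::'n. k \<noteq> j")
  case False
  then show ?thesis by (intro exI[of _ 0]) auto
next
  case True
  then obtain k0 where k0: "k0 \<noteq> j" by blast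
  define M where "M = mixed \<inter> {y::real^'n. inner (axis j 1) y = 0}"
  have Mm: "y \<in> M \<longleftrightarrow> y \<in> mixed \<and> y $ j = 0" for y by (simp add: M_def inner_axis')
  define D where "D = (\<lambda>y. B *v y - column j B) ` M"
  define N :: "(real^'m) set" where "N = \<Inter> ((\<lambda>i. {p. 0 \<le> inner (axis i 1) p}) ` UNIV)"
  have Nm: "p \<in> N \<longleftrightarrow> (\<forall>i. 0 \<le> p $ i)" for p by (simp add: N_def inner_axis')
  have cM: "convex M" "compact M" unfolding M_def
    using convex_mixed compact_mixed by (auto intro: convex_Int convex_hyperplane closed_hyperplane)
  have cD: "convex D" "compact D" unfolding D_def using D_props[OF cM] by auto
  have kM: "axis k 1 \<in> M" if "k \<noteq> j" for k using that axis_mixed[of k] by (simp add: Mm axis_def)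
  have Dk: "column k B - column j B \<in> D" if "k \<noteq> j" for k
    unfolding D_def using kM[OF that] by (auto simp: Bcol intro!: image_eqI[of _ _ "axis k 1"])
  have Dne: "D \<noteq> {}" using Dk[OF k0] by blast
  have cN: "convex N" "closed N" unfolding N_def
    by (auto intro!: convex_Inter closed_INT simp: convex_halfspace_ge closed_halfspace_ge)
  have disj: "D \<inter> N = {}"
  proof (rule ccontr)
    assume "D \<inter> N \<noteq> {}"
    then obtain y where y: "y \<in> M" "B *v y - column j B \<in> N" unfolding D_def by blast
    then have "\<forall>i. B $ i $ j \<le> (B *v y) $ i" by (simp add: Nm column_def)
    then show False using nwd y(1) by (auto simp: Mm)
  qed
  obtain a b where aD: "\<forall>d\<in>D. inner a d < b" and aN: "\<forall>p\<in>N. b < inner a p"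
    using separating_hyperplane_compact_closed[OF cD(1) cD(2) Dne cN disj] by blast
  have b0: "b < 0" using aN[rule_format, of 0] by (simp add: Nm)
  have anneg: "\<forall>i. 0 \<le> a $ i"
  proof (rule ccontr)
    assume "\<not> ?thesis"
    then obtain i where ai: "a $ i < 0" by (auto simp: not_le)
    define t where "t = (\<bar>b\<bar> + 1) / (- a $ i)"
    have t0: "t > 0" unfolding t_def using ai by (intro divide_pos_pos) auto
    have "t * a $ i = - (\<bar>b\<bar> + 1)" using ai by (simp add: t_def)
    then have "inner a (t *\<^sub>R axis i 1) < b" by (simp add: inner_axis)
    moreover have "t *\<^sub>R axis i 1 \<in> N" using t0 by (auto simp: Nm axis_def)
    ultimately show False using aN by fastforce
  qed
  have "(transpose B *v a) $ k < (transpose B *v a) $ j" if "k \<noteq> j" for k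
  proof -
    have "inner a (column k B - column j B) < 0" using aD Dk[OF that] b0 by fastforce
    then show ?thesis by (simp add: inner_diff_right inner_column[symmetric] inner_commute)
  qed
  then show ?thesis using anneg by blast
qed

lemma S4:
  fixes B :: "real^'n^'m"
  assumes x: "x \<in> Ppoly B" and b: "Pbind B (Inr j) x" and r: "P_redundant B (Inr j)"
  shows "\<exists>y\<in>mixed. y $ j = 0 \<and> (\<forall>i. B $ i $ j \<le> (B *v y) $ i)"
proof (rule ccontr)
  assume "\<not> ?thesis"
  from S4w[OF this] obtain w where w0: "\<forall>i. 0 \<le> w $ i"
    and wk: "\<And>k. k \<noteq> j \<Longrightarrow> (transpose B *v w) $ k < (transpose B *v w) $ j" by blast
  have x0: "\<forall>i. 0 \<le> x $ i" and x1: "\<And>k. (transpose B *v x) $ k \<le> 1" using x by (auto simp: in_Ppoly)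
  have xj: "(transpose B *v x) $ j = 1" using b by (simp add: Pbind_def)
  define c where "c = (transpose B *v w) $ j"
  define t where "t = 1 / (2 * (\<bar>c\<bar> + 1))"
  have t0: "t > 0" by (simp add: t_def add_pos_nonneg)
  have tc: "t * \<bar>c\<bar> < 1 / 2"
  proof -
    have "t * \<bar>c\<bar> < t * (\<bar>c\<bar> + 1)" using t0 by simp
    also have "\<dots> = 1 / 2" by (simp add: t_def)
    finally show ?thesis .
  qed
  define xt where "xt = x + t *\<^sub>R w"
  have bxt: "(transpose B *v xt) $ k = (transpose B *v x) $ k + t * (transpose B *v w) $ k" for k
    by (simp add: xt_def matrix_vector_right_distrib matrix_vector_mult_scaleR)
  define s where "s = (transpose B *v xt) $ j"
  have s_eq: "s = 1 + t * c" by (simp add: s_def bxt xj c_def)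
  have "t * (- \<bar>c\<bar>) \<le> t * c" using t0 by (intro mult_left_mono) auto
  then have "- (t * \<bar>c\<bar>) \<le> t * c" by simp
  then have s_pos: "s > 1 / 2" using tc s_eq by linarith
  have lt: "(transpose B *v xt) $ k < s" if "k \<noteq> j" for k
  proof -
    have "t * (transpose B *v w) $ k < t * c" using wk[OF that] t0 by (simp add: c_def)
    then show ?thesis using x1[of k] s_eq bxt[of k] by linarith
  qed
  define M where "M = Max (insert (s / 2) ((\<lambda>k. (transpose B *v xt) $ k) ` (- {j})))"
  have Mge1: "s / 2 \<le> M" unfolding M_def by (rule Max_ge) auto
  have Mge2: "(transpose B *v xt) $ k \<le> M" if "k \<noteq> j" for k
    unfolding M_def by (rule Max_ge) (use that in auto)
  note Mge = Mge1 Mge2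
  have Mlt: "M < s"
  proof -
    have "M \<in> insert (s / 2) ((\<lambda>k. (transpose B *v xt) $ k) ` (- {j}))"
      unfolding M_def by (intro Max_in) auto
    then show ?thesis using lt s_pos by auto
  qed
  have M0: "M > 0" using Mge(1) s_pos by linarith
  define z where "z = (1 / M) *\<^sub>R xt"
  have bz: "(transpose B *v z) $ k = (transpose B *v xt) $ k / M" for k
    by (simp add: z_def matrix_vector_mult_scaleR)
  have "z \<in> {x. \<forall>l'. l' \<noteq> Inr j \<longrightarrow> Pineq B l' x}"
  proof (clarify)
    fix l' :: "'m + 'n" assume l': "l' \<noteq> Inr j"
    show "Pineq B l' z"
    proof (cases l')
      case (Inl i)
      have "0 \<le> xt $ i" using x0 w0 t0 by (simp add: xt_def)
      then show ?thesis using Inl M0 by (simp add: Pineq_def z_def)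
    next
      case (Inr k)
      then have "k \<noteq> j" using l' by simp
      then show ?thesis using Inr Mge(2)[of k] M0 by (simp add: Pineq_def bz)
    qed
  qed
  then have "z \<in> Ppoly B" using r unfolding P_redundant_def by simp
  moreover have "(transpose B *v z) $ j > 1"
    using Mlt M0 by (simp add: bz s_def[symmetric])
  ultimately show False by (auto simp: in_Ppoly not_le[symmetric])
qed

lemma P5:
  fixes B :: "real^'n^'m"
  assumes poly: "polytope (Ppoly B)"
  shows "ndP B \<longleftrightarrow> (simple_polytope (Ppoly B) \<and>
        (\<forall>j. (\<exists>y\<in>mixed. y \<noteq> axis j 1 \<and> (\<forall>i. B $ i $ j \<le> (B *v y) $ i)) \<longrightarrow>
             (\<exists>y'\<in>mixed. \<forall>i. B $ i $ j < (B *v y') $ i)))"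
proof
  assume nd: "ndP B"
  have h: "simple_polytope (Ppoly B)" "\<forall>l. P_redundant B l \<longrightarrow> (\<forall>x\<in>Ppoly B. \<not> Pbind B l x)"
    using P4[OF poly] nd by auto
  have "(\<exists>y'\<in>mixed. \<forall>i. B $ i $ j < (B *v y') $ i)"
    if wd: "\<exists>y\<in>mixed. y \<noteq> axis j 1 \<and> (\<forall>i. B $ i $ j \<le> (B *v y) $ i)" for j
  proof (rule ccontr)
    assume nsd: "\<not> (\<exists>y'\<in>mixed. \<forall>i. B $ i $ j < (B *v y') $ i)"
    have r: "P_redundant B (Inr j)" using wd S1 by blast
    obtain xh where xh: "xh \<in> mixed" "j \<in> bestresp2 B xh" using S3[OF nsd] by blast
    note sc = scale_to_P[OF poly xh(1)]
    have "Inr j \<in> labelsP B ((1 / Max (range (\<lambda>k. (transpose B *v xh) $ k))) *\<^sub>R xh)"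
      using sc(3) xh(2) by (simp add: labelsX_def)
    then have "Pbind B (Inr j) ((1 / Max (range (\<lambda>k. (transpose B *v xh) $ k))) *\<^sub>R xh)"
      by (simp add: labelsP_def)
    then show False using h(2) r sc(2) by blast
  qed
  then show "simple_polytope (Ppoly B) \<and>
        (\<forall>j. (\<exists>y\<in>mixed. y \<noteq> axis j 1 \<and> (\<forall>i. B $ i $ j \<le> (B *v y) $ i)) \<longrightarrow>
             (\<exists>y'\<in>mixed. \<forall>i. B $ i $ j < (B *v y') $ i))" using h(1) by blast
next
  assume a: "simple_polytope (Ppoly B) \<and>
        (\<forall>j. (\<exists>y\<in>mixed. y \<noteq> axis j 1 \<and> (\<forall>i. B $ i $ j \<le> (B *v y) $ i)) \<longrightarrow>
             (\<exists>y'\<in>mixed. \<forall>i. B $ i $ j < (B *v y') $ i))"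
  have "\<forall>l. P_redundant B l \<longrightarrow> (\<forall>x\<in>Ppoly B. \<not> Pbind B l x)"
  proof (intro allI impI ballI notI)
    fix l x assume r: "P_redundant B l" and x: "x \<in> Ppoly B" and b: "Pbind B l x"
    show False
    proof (cases l)
      case (Inl i) then show False using S5 r by blast
    next
      case (Inr j)
      obtain y where y: "y \<in> mixed" "y $ j = 0" "\<forall>i. B $ i $ j \<le> (B *v y) $ i"
        using S4[OF x] b r Inr by blast
      have "y \<noteq> axis j 1" using y(2) by (auto simp: axis_def)
      then obtain y' where "y' \<in> mixed" "\<forall>i. B $ i $ j < (B *v y') $ i" using a y by blast
      then show False using S2 x b Inr by blast
    qed
  qed
  then show "ndP B" using P4[OF poly] a by blast
qed



definition sw :: "'a + 'b \<Rightarrow> 'b + 'a" where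
  "sw l = (case l of Inl i \<Rightarrow> Inr i | Inr j \<Rightarrow> Inl j)"

lemma sw_simps[simp]: "sw (Inl i) = Inr i" "sw (Inr j) = Inl j" by (simp_all add: sw_def)

lemma sw_sw[simp]: "sw (sw l) = l" by (cases l) simp_all

lemma inj_sw: "inj sw" by (metis injI sw_sw)

lemma bij_sw: "bij sw" by (metis bijI inj_sw surj_def sw_sw)

lemma Qineq_sw: "Qineq A l y \<longleftrightarrow> Pineq (transpose A) (sw l) y"
  by (cases l) (simp_all add: Qineq_def Pineq_def transpose_transpose)

lemma Qbind_sw: "Qbind A l y \<longleftrightarrow> Pbind (transpose A) (sw l) y"
  by (cases l) (simp_all add: Qbind_def Pbind_def transpose_transpose)

lemma all_sw: "(\<forall>l. P (sw l)) \<longleftrightarrow> (\<forall>l. P l)" by (metis sw_sw)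

lemma Qpoly_eq: "Qpoly A = Ppoly (transpose A)"
  unfolding Qpoly_def Ppoly_def Qineq_sw using all_sw by metis

lemma labelsQ_eq: "labelsQ A y = sw ` labelsP (transpose A) y"
proof (rule set_eqI)
  fix l show "l \<in> labelsQ A y \<longleftrightarrow> l \<in> sw ` labelsP (transpose A) y"
    by (auto simp: labelsQ_def labelsP_def Qbind_sw image_iff)
qed

lemma card_sw: "card (sw ` S) = card S"
  by (rule card_image) (meson inj_on_subset inj_sw subset_UNIV)

lemma bestresp1_eq: "bestresp1 A y = bestresp2 (transpose A) y"
  by (simp add: bestresp1_def bestresp2_def transpose_transpose)

lemma nd_split: "nondegenerate A B \<longleftrightarrow> ndP B \<and> ndP (transpose A)"
  by (simp add: nondegenerate_def ndP_def bestresp1_eq)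

lemma labelsY_eq: "labelsY A y = sw ` labelsX (transpose A) y"
  by (auto simp: labelsY_def labelsX_def bestresp1_eq image_Un image_image)

lemma sw_sub: "J \<subseteq> sw ` L \<longleftrightarrow> sw ` J \<subseteq> L"
proof
  assume "J \<subseteq> sw ` L"
  then have "sw ` J \<subseteq> sw ` sw ` L" by (rule image_mono)
  then show "sw ` J \<subseteq> L" by (simp add: image_image)
next
  assume "sw ` J \<subseteq> L"
  then have "sw ` sw ` J \<subseteq> sw ` L" by (rule image_mono)
  then show "J \<subseteq> sw ` L" by (simp add: image_image)
qed

lemma QJ_eq: "QJ A J = PI (transpose A) (sw ` J)"
proof -
  have "J \<subseteq> labelsQ A y \<longleftrightarrow> sw ` J \<subseteq> labelsP (transpose A) y" for y
    unfolding labelsQ_eq by (rule sw_sub)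
  then show ?thesis by (auto simp: QJ_def PI_def Qpoly_eq)
qed

lemma Q_redundant_eq: "Q_redundant A l \<longleftrightarrow> P_redundant (transpose A) (sw l)"
proof -
  have "(\<forall>l'. l' \<noteq> l \<longrightarrow> Qineq A l' y) \<longleftrightarrow> (\<forall>l'. l' \<noteq> sw l \<longrightarrow> Pineq (transpose A) l' y)" for y
    unfolding Qineq_sw by (metis sw_sw)
  then show ?thesis by (simp add: Q_redundant_def P_redundant_def Qpoly_eq)
qed

lemma UNIV_plus: "(UNIV :: ('a + 'b) set) = Inl ` UNIV \<union> Inr ` UNIV"
  by (auto intro: sum.exhaust) (metis range_eqI sum.exhaust)

lemma sum_UNIV_plus:
  fixes f :: "'a::finite + 'b::finite \<Rightarrow> 'c::comm_monoid_add"
  shows "(\<Sum>k\<in>UNIV. f k) = (\<Sum>i\<in>UNIV. f (Inl i)) + (\<Sum>j\<in>UNIV. f (Inr j))"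
  by (subst UNIV_plus) (rule sum_Inl_Inr; simp)

definition pair :: "real^'m::finite \<Rightarrow> real^'n::finite \<Rightarrow> real^('m + 'n)" where
  "pair x y = (\<chi> k. case k of Inl i \<Rightarrow> x $ i | Inr j \<Rightarrow> y $ j)"

definition xz :: "real^('m::finite + 'n::finite) \<Rightarrow> real^'m" where "xz z = (\<chi> i. z $ Inl i)"
definition yz :: "real^('m::finite + 'n::finite) \<Rightarrow> real^'n" where "yz z = (\<chi> j. z $ Inr j)"

lemma pair_simps[simp]: "pair x y $ Inl i = x $ i" "pair x y $ Inr j = y $ j"
  by (simp_all add: pair_def)

lemma xz_simps[simp]: "xz z $ i = z $ Inl i" "yz z $ j = z $ Inr j"
  by (simp_all add: xz_def yz_def)

lemma pair_xz_yz: "pair (xz z) (yz z) = z"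
proof (subst vec_eq_iff, intro allI)
  fix k :: "'a + 'b" show "pair (xz z) (yz z) $ k = z $ k" by (cases k) simp_all
qed

lemma xz_pair[simp]: "xz (pair x y) = x" and yz_pair[simp]: "yz (pair x y) = y"
  by (simp_all add: vec_eq_iff)

lemma Cmv: "Cmat A B *v z = pair (A *v yz z) (transpose B *v xz z)"
proof (subst vec_eq_iff, intro allI)
  fix k :: "'a + 'b"
  show "(Cmat A B *v z) $ k = pair (A *v yz z) (transpose B *v xz z) $ k"
    by (cases k) (simp_all add: matrix_vector_mult_def sum_UNIV_plus Cmat_def transpose_def)
qed

lemma card_UNIV_plus: "CARD('a::finite + 'b::finite) = CARD('a) + CARD('b)"
  by (simp add: UNIV_plus card_split)



lemma in_Qpoly: "y \<in> Qpoly A \<longleftrightarrow> (\<forall>j. 0 \<le> y $ j) \<and> (\<forall>i. (A *v y) $ i \<le> 1)"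
  by (simp add: Qpoly_eq in_Ppoly transpose_transpose)

lemma Spoly_pair: "z \<in> Spoly (Cmat A B) \<longleftrightarrow> xz z \<in> Ppoly B \<and> yz z \<in> Qpoly A"
proof -
  have "(\<forall>k. 0 \<le> z $ k) \<longleftrightarrow> (\<forall>i. 0 \<le> xz z $ i) \<and> (\<forall>j. 0 \<le> yz z $ j)"
    using all_sum[of "\<lambda>k. 0 \<le> z $ k"] by simp
  moreover have "(\<forall>k. (Cmat A B *v z) $ k \<le> 1) \<longleftrightarrow> (\<forall>i. (A *v yz z) $ i \<le> 1) \<and> (\<forall>j. (transpose B *v xz z) $ j \<le> 1)"
    using all_sum[of "\<lambda>k. (Cmat A B *v z) $ k \<le> 1"] by (simp add: Cmv)
  ultimately show ?thesis by (auto simp: Spoly_def in_Ppoly in_Qpoly)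
qed

lemma set_sum_split: "{k. P k} = Inl ` {i. P (Inl i)} \<union> Inr ` {j. P (Inr j)}"
proof (rule set_eqI)
  fix k show "k \<in> {k. P k} \<longleftrightarrow> k \<in> Inl ` {i. P (Inl i)} \<union> Inr ` {j. P (Inr j)}"
    by (cases k) auto
qed

lemma card_labelsQ: "card (labelsQ A y) = card {j. y $ j = 0} + card {i. (A *v y) $ i = 1}"
  by (simp add: labelsQ_eq card_sw card_labelsP transpose_transpose)

lemma card_S:
  fixes A B :: "real^'n^'m"
  shows "card {k. z $ k = 0} + card {k. (Cmat A B *v z) $ k = 1}
       = card (labelsP B (xz z)) + card (labelsQ A (yz z))"
proof -
  have "card {k. z $ k = 0} = card {i. xz z $ i = 0} + card {j. yz z $ j = 0}"
    by (subst set_sum_split) (simp add: card_split)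
  moreover have "card {k. (Cmat A B *v z) $ k = 1} = card {i. (A *v yz z) $ i = 1} + card {j. (transpose B *v xz z) $ j = 1}"
    by (subst set_sum_split) (simp add: card_split Cmv)
  ultimately show ?thesis by (simp add: card_labelsP card_labelsQ)
qed

lemma card_labelsQ0: "card (labelsQ (A::real^'n^'m) 0) = CARD('n)"
  by (simp add: card_labelsQ)

lemma card_labelsP0: "card (labelsP (B::real^'n^'m) 0) = CARD('m)"
  by (simp add: card_labelsP)

lemma zero_Ppoly: "0 \<in> Ppoly B" by (simp add: in_Ppoly)
lemma zero_Qpoly: "0 \<in> Qpoly A" by (simp add: in_Qpoly)

lemma D_equiv:
  fixes A B :: "real^'n^'m"
  shows "((\<forall>x\<in>Ppoly B. card (labelsP B x) \<le> CARD('m)) \<and> (\<forall>y\<in>Qpoly A. card (labelsQ A y) \<le> CARD('n)))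
    \<longleftrightarrow> (\<forall>z\<in>Spoly (Cmat A B). card {k. z $ k = 0} + card {k. (Cmat A B *v z) $ k = 1} \<le> CARD('m + 'n))"
proof
  assume a: "(\<forall>x\<in>Ppoly B. card (labelsP B x) \<le> CARD('m)) \<and> (\<forall>y\<in>Qpoly A. card (labelsQ A y) \<le> CARD('n))"
  show "\<forall>z\<in>Spoly (Cmat A B). card {k. z $ k = 0} + card {k. (Cmat A B *v z) $ k = 1} \<le> CARD('m + 'n)"
  proof
    fix z assume "z \<in> Spoly (Cmat A B)"
    then have "xz z \<in> Ppoly B" "yz z \<in> Qpoly A" by (simp_all add: Spoly_pair)
    then show "card {k. z $ k = 0} + card {k. (Cmat A B *v z) $ k = 1} \<le> CARD('m + 'n)"
      using a by (simp add: card_S card_UNIV_plus add_mono)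
  qed
next
  assume a: "\<forall>z\<in>Spoly (Cmat A B). card {k. z $ k = 0} + card {k. (Cmat A B *v z) $ k = 1} \<le> CARD('m + 'n)"
  have "card (labelsP B x) \<le> CARD('m)" if x: "x \<in> Ppoly B" for x
  proof -
    have "pair x (0::real^'n) \<in> Spoly (Cmat A B)" using x by (simp add: Spoly_pair zero_Qpoly)
    then have "card {k. pair x (0::real^'n) $ k = 0} + card {k. (Cmat A B *v pair x (0::real^'n)) $ k = 1} \<le> CARD('m + 'n)"
      using a by blast
    then show ?thesis by (simp add: card_S card_labelsQ0 card_UNIV_plus)
  qed
  moreover have "card (labelsQ A y) \<le> CARD('n)" if y: "y \<in> Qpoly A" for y
  proof -
    have "pair (0::real^'m) y \<in> Spoly (Cmat A B)" using y by (simp add: Spoly_pair zero_Ppoly)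
    then have "card {k. pair (0::real^'m) y $ k = 0} + card {k. (Cmat A B *v pair (0::real^'m) y) $ k = 1} \<le> CARD('m + 'n)"
      using a by blast
    then show ?thesis by (simp add: card_S card_labelsP0 card_UNIV_plus)
  qed
  ultimately show "(\<forall>x\<in>Ppoly B. card (labelsP B x) \<le> CARD('m)) \<and> (\<forall>y\<in>Qpoly A. card (labelsQ A y) \<le> CARD('n))"
    by blast
qed

definition gS :: "real^'d^'d \<Rightarrow> 'd + 'd \<Rightarrow> real^'d" where
  "gS C r = (case r of Inl k \<Rightarrow> - axis k 1 | Inr k \<Rightarrow> row k C)"

definition hS :: "'d + 'd \<Rightarrow> real" where
  "hS r = (case r of Inl k \<Rightarrow> 0 | Inr k \<Rightarrow> 1)"

lemma inner_row: "inner (row k C) z = (C *v z) $ k"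
  by (simp add: inner_vec_def row_def matrix_vector_mult_def)

lemma Spoly_eq: "Spoly C = polyh UNIV (gS C) hS"
proof -
  have "(\<forall>r. inner (gS C r) z \<le> hS r) \<longleftrightarrow> (\<forall>k. 0 \<le> z $ k) \<and> (\<forall>k. (C *v z) $ k \<le> 1)" for z
    using all_sum[of "\<lambda>r. inner (gS C r) z \<le> hS r"] by (simp add: gS_def hS_def inner_axis' inner_row)
  then show ?thesis by (auto simp: Spoly_def polyh_def)
qed

lemma bnd_S: "bnd UNIV (gS C) hS z = Inl ` {k. z $ k = 0} \<union> Inr ` {k. (C *v z) $ k = 1}"
  unfolding bnd_def by (subst set_sum_split) (simp add: gS_def hS_def inner_axis' inner_row)

lemma LI_scale:
  fixes g :: "'l \<Rightarrow> 'a::real_vector"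
  assumes s: "\<And>k. s k \<noteq> 0"
  shows "lin_indep_family (\<lambda>k. s k *\<^sub>R g k) K \<longleftrightarrow> lin_indep_family g K"
proof
  assume l: "lin_indep_family (\<lambda>k. s k *\<^sub>R g k) K"
  show "lin_indep_family g K" unfolding lin_indep_family_def
  proof (intro allI impI)
    fix c assume c: "(\<Sum>k\<in>K. c k *\<^sub>R g k) = 0"
    have "(\<Sum>k\<in>K. (c k / s k) *\<^sub>R (s k *\<^sub>R g k)) = 0" using c s by simp
    then have "\<forall>k\<in>K. c k / s k = 0"
      using l[unfolded lin_indep_family_def, rule_format, of "\<lambda>k. c k / s k"] by blast
    then show "\<forall>k\<in>K. c k = 0" using s by simp
  qed
next
  assume l: "lin_indep_family g K"
  show "lin_indep_family (\<lambda>k. s k *\<^sub>R g k) K" unfolding lin_indep_family_def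
  proof (intro allI impI)
    fix c assume c: "(\<Sum>k\<in>K. c k *\<^sub>R (s k *\<^sub>R g k)) = 0"
    have "(\<Sum>k\<in>K. (c k * s k) *\<^sub>R g k) = 0" using c by simp
    then have "\<forall>k\<in>K. c k * s k = 0"
      using l[unfolded lin_indep_family_def, rule_format, of "\<lambda>k. c k * s k"] by blast
    then show "\<forall>k\<in>K. c k = 0" using s by simp
  qed
qed

lemma bounded_Spoly:
  fixes A B :: "real^'n^'m"
  assumes polyP: "polytope (Ppoly B)" and polyQ: "polytope (Qpoly A)"
  shows "bounded (Spoly (Cmat A B))"
proof -
  obtain MP where MP: "\<And>x. x \<in> Ppoly B \<Longrightarrow> norm x \<le> MP" using polytope_imp_bounded[OF polyP] bounded_iff by blast
  obtain MQ where MQ: "\<And>y. y \<in> Qpoly A \<Longrightarrow> norm y \<le> MQ" using polytope_imp_bounded[OF polyQ] bounded_iff by blast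
  have "norm z \<le> real CARD('m) * MP + real CARD('n) * MQ" if z: "z \<in> Spoly (Cmat A B)" for z
  proof -
    have x: "xz z \<in> Ppoly B" and y: "yz z \<in> Qpoly A" using z by (simp_all add: Spoly_pair)
    have "norm z \<le> (\<Sum>k\<in>UNIV. \<bar>z $ k\<bar>)" by (rule norm_le_l1_cart)
    also have "\<dots> = (\<Sum>i\<in>UNIV. \<bar>xz z $ i\<bar>) + (\<Sum>j\<in>UNIV. \<bar>yz z $ j\<bar>)" by (simp add: sum_UNIV_plus)
    also have "(\<Sum>i\<in>UNIV. \<bar>xz z $ i\<bar>) \<le> (\<Sum>i\<in>(UNIV::'m set). MP)"
      by (intro sum_mono order_trans[OF component_le_norm_cart MP[OF x]])
    also have "(\<Sum>j\<in>UNIV. \<bar>yz z $ j\<bar>) \<le> (\<Sum>j\<in>(UNIV::'n set). MQ)"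
      by (intro sum_mono order_trans[OF component_le_norm_cart MQ[OF y]])
    finally show ?thesis by simp
  qed
  then show ?thesis unfolding bounded_iff by blast
qed

lemma E_equiv:
  fixes A B :: "real^'n^'m"
  assumes polyP: "polytope (Ppoly B)" and polyQ: "polytope (Qpoly A)"
  shows "(\<forall>z\<in>Spoly (Cmat A B). card {k. z $ k = 0} + card {k. (Cmat A B *v z) $ k = 1} \<le> CARD('m + 'n))
    \<longleftrightarrow> (\<forall>z\<in>Spoly (Cmat A B).
          lin_indep_family
            (\<lambda>r. case r of Inl i \<Rightarrow> axis i 1 | Inr j \<Rightarrow> row j (Cmat A B))
            (Inl ` {i. z $ i = 0} \<union> Inr ` {j. (Cmat A B *v z) $ j = 1}))"
proof -
  let ?C = "Cmat A B"
  define s :: "('m + 'n) + ('m + 'n) \<Rightarrow> real" where "s = (\<lambda>r. case r of Inl _ \<Rightarrow> -1 | Inr _ \<Rightarrow> 1)"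
  have s0: "\<And>r. s r \<noteq> 0" by (simp add: s_def split: sum.splits)
  have fam: "(\<lambda>r. case r of Inl i \<Rightarrow> axis i 1 | Inr j \<Rightarrow> row j ?C) = (\<lambda>r. s r *\<^sub>R gS ?C r)"
    by (rule ext) (simp add: s_def gS_def split: sum.splits)
  have LI: "lin_indep_family (\<lambda>r. case r of Inl i \<Rightarrow> axis i 1 | Inr j \<Rightarrow> row j ?C) K \<longleftrightarrow> lin_indep_family (gS ?C) K" for K
    unfolding fam by (rule LI_scale[OF s0])
  have bd: "bounded (polyh UNIV (gS ?C) hS)" using bounded_Spoly[OF polyP polyQ] by (simp add: Spoly_eq)
  have cardK: "card (Inl ` {i. z $ i = 0} \<union> Inr ` {j. (?C *v z) $ j = 1}) = card {k. z $ k = 0} + card {k. (?C *v z) $ k = 1}" for z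
    by (rule card_split)
  show ?thesis
  proof
    assume a: "\<forall>z\<in>Spoly ?C. card {k. z $ k = 0} + card {k. (?C *v z) $ k = 1} \<le> CARD('m + 'n)"
    show "\<forall>z\<in>Spoly ?C. lin_indep_family (\<lambda>r. case r of Inl i \<Rightarrow> axis i 1 | Inr j \<Rightarrow> row j ?C)
            (Inl ` {i. z $ i = 0} \<union> Inr ` {j. (?C *v z) $ j = 1})"
    proof (intro ballI, rule ccontr)
      fix z assume z: "z \<in> Spoly ?C" and n: "\<not> lin_indep_family (\<lambda>r. case r of Inl i \<Rightarrow> axis i 1 | Inr j \<Rightarrow> row j ?C)
            (Inl ` {i. z $ i = 0} \<union> Inr ` {j. (?C *v z) $ j = 1})"
      have "\<not> lin_indep_family (gS ?C) (bnd UNIV (gS ?C) hS z)" using n by (simp add: LI bnd_S)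
      from V3[OF _ bd _ this] z obtain z' where z': "z' \<in> polyh UNIV (gS ?C) hS"
        "card (bnd UNIV (gS ?C) hS z') > DIM(real^('m + 'n))" by (auto simp: Spoly_eq)
      then have "card {k. z' $ k = 0} + card {k. (?C *v z') $ k = 1} > CARD('m + 'n)"
        by (simp add: bnd_S cardK)
      then show False using a z' by (auto simp: Spoly_eq not_le[symmetric])
    qed
  next
    assume a: "\<forall>z\<in>Spoly ?C. lin_indep_family (\<lambda>r. case r of Inl i \<Rightarrow> axis i 1 | Inr j \<Rightarrow> row j ?C)
            (Inl ` {i. z $ i = 0} \<union> Inr ` {j. (?C *v z) $ j = 1})"
    show "\<forall>z\<in>Spoly ?C. card {k. z $ k = 0} + card {k. (?C *v z) $ k = 1} \<le> CARD('m + 'n)"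
    proof
      fix z assume z: "z \<in> Spoly ?C"
      let ?K = "Inl ` {i. z $ i = 0} \<union> Inr ` {j. (?C *v z) $ j = 1}"
      have "lin_indep_family (gS ?C) ?K" using a z LI by blast
      then have "card ?K = dim (gS ?C ` ?K)" by (intro LA2(2)) auto
      also have "\<dots> \<le> DIM(real^('m + 'n))" by (rule dim_subset_UNIV)
      finally show "card {k. z $ k = 0} + card {k. (?C *v z) $ k = 1} \<le> CARD('m + 'n)" by (simp add: cardK)
    qed
  qed
qed



lemma ndC_iff: "nondegenerate C (transpose C) \<longleftrightarrow> (\<forall>z\<in>mixed. card (bestresp1 C z) \<le> card (supp z))"
  by (simp add: nondegenerate_def bestresp1_eq)

lemma supp_split: "supp z = Inl ` supp (xz z) \<union> Inr ` supp (yz z)"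
  unfolding supp_def by (subst set_sum_split) simp

lemma mixed_pair:
  fixes x :: "real^'m" and y :: "real^'n"
  assumes "\<forall>i. 0 \<le> x $ i" "\<forall>j. 0 \<le> y $ j" "(\<Sum>i\<in>UNIV. x $ i) + (\<Sum>j\<in>UNIV. y $ j) = 1"
  shows "pair x y \<in> mixed"
  using assms by (auto simp: mixed_def sum_UNIV_plus all_sum[of "\<lambda>k. 0 \<le> pair x y $ k"])

lemma C_dir1:
  fixes A B :: "real^'n^'m" and z :: "real^('m + 'n)"
  assumes polyP: "polytope (Ppoly B)" and polyQ': "polytope (Ppoly (transpose A))"
    and nd: "ndP B \<and> ndP (transpose A)" and z: "z \<in> mixed"
  shows "card (bestresp1 (Cmat A B) z) \<le> card (supp z)"
proof -
  let ?C = "Cmat A B"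
  define x where "x = xz z"
  define y where "y = yz z"
  have x0: "\<forall>i. 0 \<le> x $ i" and y0: "\<forall>j. 0 \<le> y $ j" using mixed_nonneg[OF z] by (simp_all add: x_def y_def)
  define M where "M = Max (range (\<lambda>k. (?C *v z) $ k))"
  have le: "(?C *v z) $ k \<le> M" for k unfolding M_def by (rule Max_range_ge)
  have leA: "(A *v y) $ i \<le> M" for i using le[of "Inl i"] by (simp add: Cmv y_def)
  have leB: "(transpose B *v x) $ j \<le> M" for j using le[of "Inr j"] by (simp add: Cmv x_def)
  have "x \<noteq> 0 \<or> y \<noteq> 0"
  proof (rule ccontr)
    assume "\<not> ?thesis"
    then have "z = pair 0 0" using pair_xz_yz[of z] by (simp add: x_def y_def)
    moreover have "pair (0::real^'m) (0::real^'n) = 0" by (simp add: vec_eq_iff pair_def split: sum.splits)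
    ultimately show False using mixed_nonzero[OF z] by simp
  qed
  then have M0: "M > 0"
  proof (elim disjE)
    assume "x \<noteq> 0"
    then obtain j where "(transpose B *v x) $ j > 0" using posP[OF polyP x0] by blast
    then show "M > 0" using leB[of j] by linarith
  next
    assume "y \<noteq> 0"
    then obtain i where "(transpose (transpose A) *v y) $ i > 0" using posP[OF polyQ' y0] by blast
    then show "M > 0" using leA[of i] by (simp add: transpose_transpose)
  qed
  have br: "bestresp1 ?C z = Inl ` {i. (A *v y) $ i = M} \<union> Inr ` {j. (transpose B *v x) $ j = M}"
    unfolding bestresp1_def M_def[symmetric] by (subst set_sum_split) (simp add: Cmv x_def y_def)
  have c1: "card {i. (A *v y) $ i = M} \<le> card (supp y)"
    using BR[OF conjunct2[OF nd] y0, of M] leA M0 by (simp add: transpose_transpose)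
  have c2: "card {j. (transpose B *v x) $ j = M} \<le> card (supp x)"
    using BR[OF conjunct1[OF nd] x0, of M] leB M0 by simp
  have cs: "card (supp z) = card (supp x) + card (supp y)"
    unfolding supp_split x_def y_def by (rule card_split)
  have cb: "card (bestresp1 ?C z) = card {i. (A *v y) $ i = M} + card {j. (transpose B *v x) $ j = M}"
    unfolding br by (rule card_split)
  show ?thesis using c1 c2 cs cb by linarith
qed

lemma C_equiv:
  fixes A B :: "real^'n^'m"
  assumes polyP: "polytope (Ppoly B)" and polyQ: "polytope (Qpoly A)"
  shows "nondegenerate A B \<longleftrightarrow> nondegenerate (Cmat A B) (transpose (Cmat A B))"
proof -
  let ?C = "Cmat A B"
  have polyQ': "polytope (Ppoly (transpose A))" using polyQ by (simp add: Qpoly_eq)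
  show ?thesis unfolding ndC_iff unfolding nd_split
  proof
    assume nd: "ndP B \<and> ndP (transpose A)"
    show "\<forall>z\<in>mixed. card (bestresp1 ?C z) \<le> card (supp z)"
      using C_dir1[OF polyP polyQ' nd] by blast
  next
    assume a: "\<forall>z\<in>mixed. card (bestresp1 ?C z) \<le> card (supp z)"
    have "ndP B" unfolding ndP_def
    proof
      fix xh :: "real^'m" assume xh: "xh \<in> mixed"
      define z where "z = pair xh (0::real^'n)"
      have z: "z \<in> mixed" unfolding z_def using xh by (intro mixed_pair) (auto simp: mixed_def)
      define M where "M = Max (range (\<lambda>k. (transpose B *v xh) $ k))"
      have M0: "M > 0" using scale_to_P(1)[OF polyP xh] by (simp add: M_def)
      have leB: "(transpose B *v xh) $ k \<le> M" for k unfolding M_def by (rule Max_range_ge)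
      obtain j0 where j0: "(transpose B *v xh) $ j0 = M" using Max_range_in unfolding M_def by metis
      have Cz: "?C *v z = pair 0 (transpose B *v xh)" by (simp add: Cmv z_def)
      have "Max (range (\<lambda>k. (?C *v z) $ k)) = M"
      proof (rule Max_range_eq[of _ _ "Inr j0"])
        fix k show "(?C *v z) $ k \<le> M" using M0 leB by (cases k) (simp_all add: Cz)
      qed (simp add: Cz j0)
      then have "bestresp1 ?C z = Inl ` {i. (0::real) = M} \<union> Inr ` bestresp2 B xh"
        unfolding bestresp1_def bestresp2_def M_def[symmetric] by (subst set_sum_split) (simp add: Cz)
      then have "card (bestresp1 ?C z) = card (bestresp2 B xh)" using M0 by (simp add: card_split card_image)
      moreover have "card (supp z) = card (supp xh)" unfolding supp_split z_def
        by (simp add: card_split supp_def card_image)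
      ultimately show "card (bestresp2 B xh) \<le> card (supp xh)" using a z by metis
    qed
    moreover have "ndP (transpose A)" unfolding ndP_def
    proof
      fix yh :: "real^'n" assume yh: "yh \<in> mixed"
      define z where "z = pair (0::real^'m) yh"
      have z: "z \<in> mixed" unfolding z_def using yh by (intro mixed_pair) (auto simp: mixed_def)
      define M where "M = Max (range (\<lambda>k. (transpose (transpose A) *v yh) $ k))"
      have M0: "M > 0" using scale_to_P(1)[OF polyQ' yh] by (simp add: M_def)
      have leA: "(A *v yh) $ k \<le> M" for k unfolding M_def transpose_transpose by (rule Max_range_ge)
      obtain i0 where i0: "(A *v yh) $ i0 = M" using Max_range_in unfolding M_def transpose_transpose by metis
      have Cz: "?C *v z = pair (A *v yh) 0" by (simp add: Cmv z_def)
      have "Max (range (\<lambda>k. (?C *v z) $ k)) = M"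
      proof (rule Max_range_eq[of _ _ "Inl i0"])
        fix k show "(?C *v z) $ k \<le> M" using M0 leA by (cases k) (simp_all add: Cz)
      qed (simp add: Cz i0)
      then have "bestresp1 ?C z = Inl ` bestresp2 (transpose A) yh \<union> Inr ` {j. (0::real) = M}"
        unfolding bestresp1_def bestresp2_def M_def[symmetric] by (subst set_sum_split) (simp add: Cz transpose_transpose)
      then have "card (bestresp1 ?C z) = card (bestresp2 (transpose A) yh)" using M0 by (simp add: card_split card_image)
      moreover have "card (supp z) = card (supp yh)" unfolding supp_split z_def
        by (simp add: card_split supp_def card_image)
      ultimately show "card (bestresp2 (transpose A) yh) \<le> card (supp yh)" using a z by metis
    qed
    ultimately show "ndP B \<and> ndP (transpose A)" by blast
  qed
qed



lemma transpose_nth: "transpose A $ i $ j = A $ j $ i" by (simp add: transpose_def)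

lemma ball2_split: "S \<noteq> {} \<Longrightarrow> T \<noteq> {} \<Longrightarrow> (\<forall>x\<in>S. \<forall>y\<in>T. P x \<and> Q y) \<longleftrightarrow> (\<forall>x\<in>S. P x) \<and> (\<forall>y\<in>T. Q y)"
  by blast

lemma mixed_ne: "mixed \<noteq> {}" using axis_mixed by blast

lemma sw_sw_image[simp]: "sw ` sw ` S = S" by (simp add: image_image)

theorem mainTheorem11:
  fixes A B :: "real^'n^'m"
  assumes polyP: "polytope (Ppoly B)"
      and polyQ: "polytope (Qpoly A)"
  shows
   "(nondegenerate A B \<longleftrightarrow>
       ((\<forall>x\<in>Ppoly B. card (labelsP B x) \<le> CARD('m)) \<and>
        (\<forall>y\<in>Qpoly A. card (labelsQ A y) \<le> CARD('n)))) \<and>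
    (nondegenerate A B \<longleftrightarrow> nondegenerate (Cmat A B) (transpose (Cmat A B))) \<and>
    (nondegenerate A B \<longleftrightarrow>
       (\<forall>z\<in>Spoly (Cmat A B).
          card {k. z $ k = 0} + card {k. (Cmat A B *v z) $ k = 1} \<le> CARD('m + 'n))) \<and>
    (nondegenerate A B \<longleftrightarrow>
       (\<forall>z\<in>Spoly (Cmat A B).
          lin_indep_family
            (\<lambda>r. case r of Inl i \<Rightarrow> axis i 1 | Inr j \<Rightarrow> row j (Cmat A B))
            (Inl ` {i. z $ i = 0} \<union> Inr ` {j. (Cmat A B *v z) $ j = 1}))) \<and>
    (nondegenerate A B \<longleftrightarrow>
       (\<forall>xh\<in>mixed. \<forall>yh\<in>mixed.
          lin_indep_family (\<lambda>j. \<chi> i. if i \<in> supp xh then B $ i $ j else 0)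
                           (bestresp2 B xh) \<and>
          lin_indep_family (\<lambda>i. \<chi> j. if j \<in> supp yh then A $ i $ j else 0)
                           (bestresp1 A yh))) \<and>
    (nondegenerate A B \<longleftrightarrow>
       (\<forall>xh\<in>mixed. \<forall>yh\<in>mixed.
          aff_dim (PI B (labelsX B xh)) = int CARD('m) - int (card (labelsX B xh)) \<and>
          aff_dim (QJ A (labelsY A yh)) = int CARD('n) - int (card (labelsY A yh)))) \<and>
    (nondegenerate A B \<longleftrightarrow>
       (simple_polytope (Ppoly B) \<and> simple_polytope (Qpoly A) \<and>
        (\<forall>l. P_redundant B l \<longrightarrow> (\<forall>x\<in>Ppoly B. \<not> Pbind B l x)) \<and>
        (\<forall>l. Q_redundant A l \<longrightarrow> (\<forall>y\<in>Qpoly A. \<not> Qbind A l y)))) \<and>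
    (nondegenerate A B \<longleftrightarrow>
       (simple_polytope (Ppoly B) \<and> simple_polytope (Qpoly A) \<and>
        (\<forall>i. (\<exists>x\<in>mixed. x \<noteq> axis i 1 \<and> (\<forall>j. A $ i $ j \<le> (x v* A) $ j)) \<longrightarrow>
             (\<exists>x'\<in>mixed. \<forall>j. A $ i $ j < (x' v* A) $ j)) \<and>
        (\<forall>j. (\<exists>y\<in>mixed. y \<noteq> axis j 1 \<and> (\<forall>i. B $ i $ j \<le> (B *v y) $ i)) \<longrightarrow>
             (\<exists>y'\<in>mixed. \<forall>i. B $ i $ j < (B *v y') $ i))))"
proof -
  let ?A = "transpose A"
  have polyQ': "polytope (Ppoly ?A)" using polyQ by (simp add: Qpoly_eq)
  have nd: "nondegenerate A B \<longleftrightarrow> ndP B \<and> ndP ?A" by (rule nd_split)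
  have bQ: "(\<forall>y\<in>Qpoly A. card (labelsQ A y) \<le> CARD('n)) \<longleftrightarrow> bP ?A"
    by (simp add: bP_def Qpoly_eq labelsQ_eq card_sw)
  have c1: "nondegenerate A B \<longleftrightarrow>
       ((\<forall>x\<in>Ppoly B. card (labelsP B x) \<le> CARD('m)) \<and>
        (\<forall>y\<in>Qpoly A. card (labelsQ A y) \<le> CARD('n)))"
    unfolding nd bQ using P1[OF polyP] P1[OF polyQ'] by (simp add: bP_def)
  have c2: "nondegenerate A B \<longleftrightarrow> nondegenerate (Cmat A B) (transpose (Cmat A B))"
    by (rule C_equiv[OF polyP polyQ])
  have c3: "nondegenerate A B \<longleftrightarrow>
       (\<forall>z\<in>Spoly (Cmat A B).
          card {k. z $ k = 0} + card {k. (Cmat A B *v z) $ k = 1} \<le> CARD('m + 'n))"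
    using c1 D_equiv[of B A] by simp
  have c4: "nondegenerate A B \<longleftrightarrow>
       (\<forall>z\<in>Spoly (Cmat A B).
          lin_indep_family
            (\<lambda>r. case r of Inl i \<Rightarrow> axis i 1 | Inr j \<Rightarrow> row j (Cmat A B))
            (Inl ` {i. z $ i = 0} \<union> Inr ` {j. (Cmat A B *v z) $ j = 1}))"
    using c3 E_equiv[OF polyP polyQ] by simp
  have fQ: "(\<forall>yh\<in>mixed. lin_indep_family (\<lambda>i. \<chi> j. if j \<in> supp yh then A $ i $ j else 0) (bestresp1 A yh))
      \<longleftrightarrow> ndP ?A"
    using P2[OF polyQ'] unfolding transpose_nth bestresp1_eq by simp
  have c5: "nondegenerate A B \<longleftrightarrow>
       (\<forall>xh\<in>mixed. \<forall>yh\<in>mixed.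
          lin_indep_family (\<lambda>j. \<chi> i. if i \<in> supp xh then B $ i $ j else 0)
                           (bestresp2 B xh) \<and>
          lin_indep_family (\<lambda>i. \<chi> j. if j \<in> supp yh then A $ i $ j else 0)
                           (bestresp1 A yh))"
    unfolding nd ball2_split[OF mixed_ne mixed_ne] using P2[OF polyP] fQ by simp
  have gQ: "(\<forall>yh\<in>mixed. aff_dim (QJ A (labelsY A yh)) = int CARD('n) - int (card (labelsY A yh)))
      \<longleftrightarrow> ndP ?A"
    using P3[OF polyQ'] by (simp add: QJ_eq labelsY_eq card_sw)
  have c6: "nondegenerate A B \<longleftrightarrow>
       (\<forall>xh\<in>mixed. \<forall>yh\<in>mixed.
          aff_dim (PI B (labelsX B xh)) = int CARD('m) - int (card (labelsX B xh)) \<and>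
          aff_dim (QJ A (labelsY A yh)) = int CARD('n) - int (card (labelsY A yh)))"
    unfolding nd ball2_split[OF mixed_ne mixed_ne] using P3[OF polyP] gQ by simp
  have hQ: "(simple_polytope (Qpoly A) \<and> (\<forall>l. Q_redundant A l \<longrightarrow> (\<forall>y\<in>Qpoly A. \<not> Qbind A l y)))
      \<longleftrightarrow> ndP ?A"
  proof -
    have "(\<forall>l. Q_redundant A l \<longrightarrow> (\<forall>y\<in>Qpoly A. \<not> Qbind A l y))
        \<longleftrightarrow> (\<forall>l. P_redundant ?A (sw l) \<longrightarrow> (\<forall>y\<in>Ppoly ?A. \<not> Pbind ?A (sw l) y))"
      by (simp add: Q_redundant_eq Qbind_sw Qpoly_eq)
    also have "\<dots> \<longleftrightarrow> (\<forall>l. P_redundant ?A l \<longrightarrow> (\<forall>y\<in>Ppoly ?A. \<not> Pbind ?A l y))"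
      by (rule all_sw)
    finally show ?thesis using P4[OF polyQ'] by (simp add: Qpoly_eq)
  qed
  have c7: "nondegenerate A B \<longleftrightarrow>
       (simple_polytope (Ppoly B) \<and> simple_polytope (Qpoly A) \<and>
        (\<forall>l. P_redundant B l \<longrightarrow> (\<forall>x\<in>Ppoly B. \<not> Pbind B l x)) \<and>
        (\<forall>l. Q_redundant A l \<longrightarrow> (\<forall>y\<in>Qpoly A. \<not> Qbind A l y)))"
    unfolding nd using P4[OF polyP] hQ by blast
  have iQ: "(simple_polytope (Qpoly A) \<and>
        (\<forall>i. (\<exists>x\<in>mixed. x \<noteq> axis i 1 \<and> (\<forall>j. A $ i $ j \<le> (x v* A) $ j)) \<longrightarrow>
             (\<exists>x'\<in>mixed. \<forall>j. A $ i $ j < (x' v* A) $ j))) \<longleftrightarrow> ndP ?A"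
    using P5[OF polyQ'] unfolding transpose_nth transpose_matrix_vector Qpoly_eq by simp
  have c8: "nondegenerate A B \<longleftrightarrow>
       (simple_polytope (Ppoly B) \<and> simple_polytope (Qpoly A) \<and>
        (\<forall>i. (\<exists>x\<in>mixed. x \<noteq> axis i 1 \<and> (\<forall>j. A $ i $ j \<le> (x v* A) $ j)) \<longrightarrow>
             (\<exists>x'\<in>mixed. \<forall>j. A $ i $ j < (x' v* A) $ j)) \<and>
        (\<forall>j. (\<exists>y\<in>mixed. y \<noteq> axis j 1 \<and> (\<forall>i. B $ i $ j \<le> (B *v y) $ i)) \<longrightarrow>
             (\<exists>y'\<in>mixed. \<forall>i. B $ i $ j < (B *v y') $ i)))"
    unfolding nd using P5[OF polyP] iQ by blast
  show ?thesis using c1 c2 c3 c4 c5 c6 c7 c8 by blast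
qed


end
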